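(* Consider the MPS model described in the context. For each fixed $\mathbf{x}=(x_1,\dots,x_n)\in\mathbb{R}^n$, as $D_1,\dots,D_n\to\infty$ sequentially, $$\Psi(\mathbf{x})\xrightarrow{\text{Dist.}}\mathcal{N}\Big(0,\ \prod_{i=1}^n\Big(\sum_{j=1}^{d_i}\phi_i^{j}(x_i)^2\Big)\sigma_i^2\Big).$$
   Context: Fix $n\ge 1$, finite physical dimensions $d_1,\dots,d_n$, feature maps $\phi_i:\mathbb{R}\to\mathbb{R}^{d_i}$ with components $\phi_i^{s}$, and constants $\sigma_1,\dots,\sigma_n>0$. For bond dimensions $D_1,\dots,D_n$ put $D_{n+1}=D_1$. The MPS consists of random tensors $A^{(i)}_{s;a,b}$, $s\le d_i$, $a\le D_i$, $b\le D_{i+1}$, all entries independent with $A^{(i)}_{s;a,b}\sim\mathcal{N}(0,\sigma_i^2/\sqrt{D_iD_{i+1}})$. The MPS output is $\Psi(\mathbf{x})=\sum_{s_1,\dots,s_n}\sum_{a_1,\dots,a_n}A^{(1)}_{s_1;a_1a_2}\cdots A^{(n)}_{s_n;a_na_1}\prod_{i=1}^n\phi_i^{s_i}(x_i)$. "Sequentially" means iterated limits in which the bond dimensions are sent to infinity one after another. *)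

theory Defs
  imports "HOL-Probability.Probability"
begin

definition gaussian :: "real \<Rightarrow> real \<Rightarrow> real measure" where
  "gaussian m v = (if v = 0 then return borel m else density lborel (normal_density m (sqrt v)))"

text \<open>Sites are indexed 0..n-1; the bond dimension of site i is D i, the right bond of site i
  is D ((i+1) mod n) (periodic boundary, D_{n+1} = D_1).  Feature map: phi i x s = phi_i^s(x).\<close>

definition mps_index :: "nat \<Rightarrow> (nat \<Rightarrow> nat) \<Rightarrow> (nat \<Rightarrow> nat) \<Rightarrow> (nat \<times> nat \<times> nat \<times> nat) set" where
  "mps_index n d D = {(i, s, a, b). i < n \<and> s < d i \<and> a < D i \<and> b < D ((i + 1) mod n)}"

definition mps_entries :: "nat \<Rightarrow> (nat \<Rightarrow> nat) \<Rightarrow> (nat \<Rightarrow> real) \<Rightarrow> (nat \<Rightarrow> nat)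
    \<Rightarrow> ((nat \<times> nat \<times> nat \<times> nat) \<Rightarrow> real) measure" where
  "mps_entries n d \<sigma> D = PiM (mps_index n d D)
     (\<lambda>(i, s, a, b). gaussian 0 ((\<sigma> i)\<^sup>2 / sqrt (real (D i) * real (D ((i + 1) mod n)))))"

definition mps_output :: "nat \<Rightarrow> (nat \<Rightarrow> nat) \<Rightarrow> (nat \<Rightarrow> real \<Rightarrow> nat \<Rightarrow> real) \<Rightarrow> (nat \<Rightarrow> nat)
    \<Rightarrow> ((nat \<times> nat \<times> nat \<times> nat) \<Rightarrow> real) \<Rightarrow> (nat \<Rightarrow> real) \<Rightarrow> real" where
  "mps_output n d \<phi> D A x =
     (\<Sum>s\<in>PiE {..<n} (\<lambda>i. {..<d i}). \<Sum>a\<in>PiE {..<n} (\<lambda>i. {..<D i}).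
        (\<Prod>i<n. A (i, s i, a i, a ((i + 1) mod n))) * (\<Prod>i<n. \<phi> i (x i) (s i)))"

definition mps_law :: "nat \<Rightarrow> (nat \<Rightarrow> nat) \<Rightarrow> (nat \<Rightarrow> real \<Rightarrow> nat \<Rightarrow> real) \<Rightarrow> (nat \<Rightarrow> real)
    \<Rightarrow> (nat \<Rightarrow> real) \<Rightarrow> (nat \<Rightarrow> nat) \<Rightarrow> real measure" where
  "mps_law n d \<phi> \<sigma> x D = distr (mps_entries n d \<sigma> D) borel (\<lambda>A. mps_output n d \<phi> D A x)"

text \<open>Sequential (iterated) weak limit: first D 0 \<rightarrow> \<infinity>, then D 1 \<rightarrow> \<infinity>, ..., finally D (n-1) \<rightarrow> \<infinity>.
  mu k D is the limit law after D 0, ..., D (k-1) have been sent to infinity (depends on D k .. D (n-1)).\<close>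
definition seq_weak_limit :: "nat \<Rightarrow> ((nat \<Rightarrow> nat) \<Rightarrow> real measure) \<Rightarrow> real measure \<Rightarrow> bool" where
  "seq_weak_limit n L \<nu> \<longleftrightarrow>
     (\<exists>\<mu> :: nat \<Rightarrow> (nat \<Rightarrow> nat) \<Rightarrow> real measure.
        (\<forall>D. (\<forall>i<n. 1 \<le> D i) \<longrightarrow> \<mu> 0 D = L D) \<and>
        (\<forall>k<n. \<forall>D. (\<forall>i<n. 1 \<le> D i) \<longrightarrow>
            real_distribution (\<mu> (Suc k) D) \<and>
            weak_conv_m (\<lambda>m. \<mu> k (D(k := Suc m))) (\<mu> (Suc k) D)) \<and>
        (\<forall>D. (\<forall>i<n. 1 \<le> D i) \<longrightarrow> \<mu> n D = \<nu>))"

end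

theory Submission
  imports Defs
begin


lemma gaussian_zero_distr:
  "gaussian 0 0 = distr std_normal_distribution borel (\<lambda>z. sqrt 0 * z)"
proof -
  interpret std: prob_space std_normal_distribution
    using prob_space_normal_density by simp
  show ?thesis
    unfolding gaussian_def
    apply (intro measure_eqI)
     apply simp
    apply (simp add: emeasure_distr std.emeasure_space_1[simplified] emeasure_return)
    done
qed

lemma gaussian_pos_distr:
  assumes v: "0 < v"
  shows "gaussian 0 v = distr std_normal_distribution borel (\<lambda>z. sqrt v * z)"
proof -
  define s where "s = sqrt v"
  have s: "0 < s" using v by (simp add: s_def)
  have key: "ennreal (normal_density 0 s (s * z)) * ennreal \<bar>s\<bar> = ennreal (std_normal_density z)" for z
  proof -
    have "normal_density 0 s (s * z) * \<bar>s\<bar> = std_normal_density z"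
      using s unfolding normal_density_def
      by (simp add: power_mult_distrib real_sqrt_mult field_simps)
    then show ?thesis
      using s by (simp add: ennreal_mult'[symmetric])
  qed
  show ?thesis
    unfolding gaussian_def s_def[symmetric] using v
  proof (intro measure_eqI, simp)
    fix A :: "real set" assume A: "A \<in> sets (if v = 0 then return borel 0 else density lborel (normal_density 0 s))"
    then have A[measurable]: "A \<in> sets borel" using v by simp
    have "emeasure (density lborel (normal_density 0 s)) A
        = (\<integral>\<^sup>+x. ennreal (normal_density 0 s x) * indicator A x \<partial>lborel)"
      by (simp add: emeasure_density nn_integral_set_ennreal[symmetric] mult.commute)
    also have "\<dots> = \<bar>s\<bar> * (\<integral>\<^sup>+z. ennreal (normal_density 0 s (0 + s * z)) * indicator A (0 + s * z) \<partial>lborel)"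
      using s by (intro nn_integral_real_affine) auto
    also have "\<dots> = (\<integral>\<^sup>+z. ennreal (std_normal_density z) * indicator A (s * z) \<partial>lborel)"
      by (subst nn_integral_cmult[symmetric]) (auto intro!: nn_integral_cong simp: key[symmetric] mult_ac)
    also have "\<dots> = emeasure (distr std_normal_distribution borel (\<lambda>z. s * z)) A"
    proof -
      have m: "(\<lambda>z. s * z) -` A \<in> sets lborel"
        using measurable_sets_borel[of "\<lambda>z. s * z" lborel A] A by simp
      show ?thesis
        apply (subst emeasure_distr, simp, simp)
        apply (simp add: emeasure_density[OF _ m])
        apply (intro nn_integral_cong)
        apply (auto simp: indicator_def)
        done
    qed
    finally show "emeasure (if v = 0 then return borel 0 else density lborel (normal_density 0 s)) A
        = emeasure (distr std_normal_distribution borel ((*) s)) A"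
      using v by simp
  qed
qed

lemma gaussian_distr:
  assumes "0 \<le> v"
  shows "gaussian 0 v = distr std_normal_distribution borel (\<lambda>z. sqrt v * z)"
  using assms gaussian_zero_distr gaussian_pos_distr by (cases "v = 0") auto

lemma sets_gaussian[simp, measurable_cong]: "0 \<le> v \<Longrightarrow> sets (gaussian 0 v) = sets borel"
  by (simp add: gaussian_distr)

lemma space_gaussian[simp]: "0 \<le> v \<Longrightarrow> space (gaussian 0 v) = UNIV"
  by (simp add: gaussian_distr)

lemma prob_space_gaussian: "0 \<le> v \<Longrightarrow> prob_space (gaussian 0 v)"
  unfolding gaussian_distr
  by (intro prob_space.prob_space_distr) (auto simp: prob_space_normal_density)

lemma real_distribution_gaussian: "0 \<le> v \<Longrightarrow> real_distribution (gaussian 0 v)"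
  unfolding real_distribution_def real_distribution_axioms_def
  by (auto simp: prob_space_gaussian)

lemma integral_gaussian:
  fixes f :: "real \<Rightarrow> 'b::{banach, second_countable_topology}"
  assumes "0 \<le> v" "f \<in> borel_measurable borel"
  shows "integral\<^sup>L (gaussian 0 v) f = (\<integral>z. f (sqrt v * z) \<partial>std_normal_distribution)"
  using assms by (simp add: gaussian_distr integral_distr)

lemma integrable_gaussian_iff:
  fixes f :: "real \<Rightarrow> 'b::{banach, second_countable_topology}"
  assumes "0 \<le> v" "f \<in> borel_measurable borel"
  shows "integrable (gaussian 0 v) f \<longleftrightarrow> integrable std_normal_distribution (\<lambda>z. f (sqrt v * z))"
  using assms by (simp add: gaussian_distr integrable_distr_eq)

lemma char_gaussian:
  assumes "0 \<le> v"
  shows "(\<integral>y. iexp (t * y) \<partial>gaussian 0 v) = complex_of_real (exp (- (t\<^sup>2 * v) / 2))"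
proof -
  have "(\<integral>y. iexp (t * y) \<partial>gaussian 0 v) = (\<integral>z. iexp ((t * sqrt v) * z) \<partial>std_normal_distribution)"
    using assms by (subst integral_gaussian) (auto simp: mult_ac)
  also have "\<dots> = char std_normal_distribution (t * sqrt v)"
    by (simp add: char_def)
  also have "\<dots> = complex_of_real (exp (- (t\<^sup>2 * v) / 2))"
    using assms by (simp add: char_std_normal_distribution power_mult_distrib)
  finally show ?thesis .
qed

lemma integrable_gaussian_power: "0 \<le> v \<Longrightarrow> integrable (gaussian 0 v) (\<lambda>y. y ^ k)"
  by (subst integrable_gaussian_iff)
     (auto simp: power_mult_distrib intro!: integrable_mult_right integrable_std_normal_distribution_moment)

lemma gaussian_moment1: "0 \<le> v \<Longrightarrow> (\<integral>y. y \<partial>gaussian 0 v) = 0"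
  using integral_std_normal_distribution_moment_odd[of 1]
  by (subst integral_gaussian) auto

lemma gaussian_moment2: "0 \<le> v \<Longrightarrow> (\<integral>y. y\<^sup>2 \<partial>gaussian 0 v) = v"
  using std_normal_distribution_even_moments(1)[of 1]
  by (subst integral_gaussian) (auto simp: power_mult_distrib)

lemma gaussian_moment4: "0 \<le> v \<Longrightarrow> (\<integral>y. y ^ 4 \<partial>gaussian 0 v) = 3 * v\<^sup>2"
proof -
  assume v: "0 \<le> v"
  have "(\<integral>y. y ^ 4 \<partial>gaussian 0 v) = (\<integral>z. (sqrt v)^4 * z ^ (2 * 2) \<partial>std_normal_distribution)"
    using v by (subst integral_gaussian) (auto simp: power_mult_distrib)
  also have "\<dots> = (sqrt v)^4 * 3"
    using std_normal_distribution_even_moments(1)[of 2]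
    by (simp add: fact_numeral)
  also have "(sqrt v)^4 = v\<^sup>2" using v
    by (metis (no_types, lifting) num_double numeral_times_numeral power2_eq_square power_mult real_sqrt_pow2)
  finally show ?thesis by simp
qed


lemma integral_PiM_restrict:
  fixes f :: "('i \<Rightarrow> 'a) \<Rightarrow> 'b::{banach, second_countable_topology}"
  assumes M: "\<And>i. prob_space (M i)" and I: "finite I" "J \<subseteq> I"
    and f: "f \<in> borel_measurable (PiM J M)"
    and dep: "\<And>x. x \<in> space (PiM I M) \<Longrightarrow> f x = f (restrict x J)"
  shows "integral\<^sup>L (PiM I M) f = integral\<^sup>L (PiM J M) f"
proof -
  interpret product_prob_space M I by (simp add: product_prob_space_def product_prob_space_axioms_def product_sigma_finite_def M prob_space_imp_sigma_finite)
  have "integral\<^sup>L (PiM J M) f = integral\<^sup>L (distr (PiM I M) (PiM J M) (\<lambda>x. restrict x J)) f"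
    using distr_restrict[OF I(2,1)] by simp
  also have "\<dots> = (\<integral>x. f (restrict x J) \<partial>PiM I M)"
    using I by (intro integral_distr measurable_restrict_subset f)
  also have "\<dots> = integral\<^sup>L (PiM I M) f"
    by (rule Bochner_Integration.integral_cong[OF refl]) (rule dep[symmetric])
  finally show ?thesis by simp
qed

lemma nn_integral_PiM_restrict:
  assumes M: "\<And>i. prob_space (M i)" and I: "finite I" "J \<subseteq> I"
    and f: "f \<in> borel_measurable (PiM J M)"
    and dep: "\<And>x. x \<in> space (PiM I M) \<Longrightarrow> f x = f (restrict x J)"
  shows "integral\<^sup>N (PiM I M) f = integral\<^sup>N (PiM J M) f"
proof -
  interpret product_prob_space M I by (simp add: product_prob_space_def product_prob_space_axioms_def product_sigma_finite_def M prob_space_imp_sigma_finite)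
  have "integral\<^sup>N (PiM J M) f = integral\<^sup>N (distr (PiM I M) (PiM J M) (\<lambda>x. restrict x J)) f"
    using distr_restrict[OF I(2,1)] by simp
  also have "\<dots> = (\<integral>\<^sup>+x. f (restrict x J) \<partial>PiM I M)"
    using I f by (intro nn_integral_distr measurable_restrict_subset) (simp_all cong: measurable_cong_sets)
  also have "\<dots> = integral\<^sup>N (PiM I M) f"
    by (rule nn_integral_cong) (rule dep[symmetric])
  finally show ?thesis by simp
qed

lemma measurable_dep_restrict:
  assumes I: "J \<subseteq> I" and f: "f \<in> measurable (PiM J M) N"
    and dep: "\<And>x. x \<in> space (PiM I M) \<Longrightarrow> f x = f (restrict x J)"
  shows "f \<in> measurable (PiM I M) N"
proof -
  have "(\<lambda>x. f (restrict x J)) \<in> measurable (PiM I M) N"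
    using measurable_comp[OF measurable_restrict_subset[OF I] f] by (simp add: comp_def)
  then show ?thesis
    by (rule measurable_cong[THEN iffD1, rotated]) (simp add: dep)
qed

lemma gauss_cond:
  fixes M :: "'i \<Rightarrow> real measure" and cf :: "'i \<Rightarrow> ('i \<Rightarrow> real) \<Rightarrow> real"
  assumes M: "\<And>i. prob_space (M i)" and I: "finite I" "J \<subseteq> I"
    and MJ: "\<And>j. j \<in> J \<Longrightarrow> M j = gaussian 0 (w j)" and w: "\<And>j. j \<in> J \<Longrightarrow> 0 \<le> w j"
    and cf: "\<And>j. j \<in> J \<Longrightarrow> cf j \<in> borel_measurable (PiM (I - J) M)"
    and dep: "\<And>j x. j \<in> J \<Longrightarrow> cf j x = cf j (restrict x (I - J))"
  shows "(\<integral>x. iexp (t * (\<Sum>j\<in>J. x j * cf j x)) \<partial>PiM I M)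
       = (\<integral>x. complex_of_real (exp (- (t\<^sup>2 * (\<Sum>j\<in>J. w j * (cf j x)\<^sup>2)) / 2)) \<partial>PiM I M)"
proof -
  interpret product_prob_space M I by (simp add: product_prob_space_def product_prob_space_axioms_def product_sigma_finite_def M prob_space_imp_sigma_finite)
  have fJ: "finite J" "finite (I - J)" using I finite_subset by auto
  interpret PJ: prob_space "PiM J M" by (intro prob_space_PiM M)
  have IJ: "(I - J) \<union> J = I" using I by auto
  have cfI: "cf j \<in> borel_measurable (PiM I M)" if "j \<in> J" for j
    using measurable_dep_restrict[of "I - J" I "cf j" M borel] cf[OF that] dep[OF that] by auto
  have compI: "(\<lambda>x. x j) \<in> borel_measurable (PiM I M)" if "j \<in> J" for j
  proof -
    have "(\<lambda>x. x j) \<in> measurable (PiM I M) (M j)"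
      using that I by (intro measurable_component_singleton) auto
    then show ?thesis
      using MJ[OF that] w[OF that] by (simp cong: measurable_cong_sets)
  qed
  have compJ: "(\<lambda>x. x j) \<in> borel_measurable (PiM J M)" if "j \<in> J" for j
  proof -
    have "(\<lambda>x. x j) \<in> measurable (PiM J M) (M j)"
      using that by (intro measurable_component_singleton) auto
    then show ?thesis
      using MJ[OF that] w[OF that] by (simp cong: measurable_cong_sets)
  qed
  let ?f = "\<lambda>x. iexp (t * (\<Sum>j\<in>J. x j * cf j x))"
  let ?g = "\<lambda>x. complex_of_real (exp (- (t\<^sup>2 * (\<Sum>j\<in>J. w j * (cf j x)\<^sup>2)) / 2))"
  have fm: "?f \<in> borel_measurable (PiM I M)"
    using cfI compI fJ by measurable
  have gm: "?g \<in> borel_measurable (PiM I M)"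
    using cfI fJ by measurable
  have fi: "integrable (PiM I M) ?f"
    by (intro P.integrable_const_bound[where B=1] AE_I2 fm) (simp add: norm_exp_i_times)
  have gi: "integrable (PiM I M) ?g"
    by (intro P.integrable_const_bound[where B=1] AE_I2 gm) (auto intro!: mult_nonneg_nonneg sum_nonneg simp: w)
  have mergecf: "cf j (merge (I - J) J (x, y)) = cf j x"
    if "j \<in> J" "x \<in> space (PiM (I - J) M)" for j x y
  proof -
    have "restrict (merge (I - J) J (x, y)) (I - J) = restrict x (I - J)"
      by (auto simp: merge_def restrict_def fun_eq_iff)
    also have "\<dots> = x" using that(2) by (simp add: space_PiM)
    finally show ?thesis using dep[OF that(1), of "merge (I - J) J (x, y)"] by simp
  qed
  have inner: "(\<integral>y. ?f (merge (I - J) J (x, y)) \<partial>PiM J M) = (\<integral>y. ?g (merge (I - J) J (x, y)) \<partial>PiM J M)"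
    if x: "x \<in> space (PiM (I - J) M)" for x
  proof -
    have "(\<integral>y. ?f (merge (I - J) J (x, y)) \<partial>PiM J M) = (\<integral>y. (\<Prod>j\<in>J. iexp ((t * cf j x) * y j)) \<partial>PiM J M)"
    proof (intro Bochner_Integration.integral_cong refl)
      fix y assume "y \<in> space (PiM J M)"
      have "?f (merge (I - J) J (x, y)) = iexp (t * (\<Sum>j\<in>J. y j * cf j x))"
      proof -
        have "(\<Sum>j\<in>J. merge (I - J) J (x, y) j * cf j (merge (I - J) J (x, y))) = (\<Sum>j\<in>J. y j * cf j x)"
        proof (intro sum.cong refl)
          fix j assume j: "j \<in> J"
          have "merge (I - J) J (x, y) j = y j" using j by (simp add: merge_def)
          then show "merge (I - J) J (x, y) j * cf j (merge (I - J) J (x, y)) = y j * cf j x"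
            using mergecf[OF j x] by simp
        qed
        then show ?thesis by simp
      qed
      also have "\<dots> = exp (\<Sum>j\<in>J. \<i> * complex_of_real ((t * cf j x) * y j))"
        by (simp add: sum_distrib_left mult_ac)
      also have "\<dots> = (\<Prod>j\<in>J. iexp ((t * cf j x) * y j))"
        by (simp add: exp_sum fJ)
      finally show "?f (merge (I - J) J (x, y)) = (\<Prod>j\<in>J. iexp ((t * cf j x) * y j))" .
    qed
    also have "\<dots> = (\<Prod>j\<in>J. (\<integral>y. iexp ((t * cf j x) * y) \<partial>M j))"
    proof (intro product_integral_prod fJ)
      fix j assume j: "j \<in> J"
      show "integrable (M j) (\<lambda>y. iexp ((t * cf j x) * y))"
        using MJ[OF j] w[OF j]
        by (intro finite_measure.integrable_const_bound[where B=1] AE_I2 prob_space.finite_measure M)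
           (auto simp: norm_exp_i_times)
    qed
    also have "\<dots> = (\<Prod>j\<in>J. complex_of_real (exp (- ((t * cf j x)\<^sup>2 * w j) / 2)))"
    proof (intro prod.cong refl)
      fix j assume j: "j \<in> J"
      show "(\<integral>y. iexp ((t * cf j x) * y) \<partial>M j) = complex_of_real (exp (- ((t * cf j x)\<^sup>2 * w j) / 2))"
        unfolding MJ[OF j] by (rule char_gaussian[OF w[OF j]])
    qed
    also have "\<dots> = complex_of_real (exp (\<Sum>j\<in>J. - ((t * cf j x)\<^sup>2 * w j) / 2))"
      by (simp add: exp_sum fJ)
    also have "\<dots> = ?g x"
      by (auto intro!: arg_cong[where f="\<lambda>r. complex_of_real (exp r)"]
          simp: sum_divide_distrib[symmetric] sum_negf sum_distrib_left power_mult_distrib mult_ac)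
    also have "\<dots> = (\<integral>y. ?g (merge (I - J) J (x, y)) \<partial>PiM J M)"
    proof -
      have "(\<integral>y. ?g (merge (I - J) J (x, y)) \<partial>PiM J M) = (\<integral>y. ?g x \<partial>PiM J M)"
        using x by (intro Bochner_Integration.integral_cong refl) (simp add: mergecf)
      then show ?thesis by (simp add: PJ.prob_space del: integral_of_real)
    qed
    finally show ?thesis by (simp only:)
  qed
  have "integral\<^sup>L (PiM I M) ?f = integral\<^sup>L (PiM ((I - J) \<union> J) M) ?f" by (simp only: IJ)
  also have "\<dots> = (\<integral>x. (\<integral>y. ?f (merge (I - J) J (x, y)) \<partial>PiM J M) \<partial>PiM (I - J) M)"
    using fJ fi IJ by (intro product_integral_fold) auto
  also have "\<dots> = (\<integral>x. (\<integral>y. ?g (merge (I - J) J (x, y)) \<partial>PiM J M) \<partial>PiM (I - J) M)"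
    by (intro Bochner_Integration.integral_cong refl inner)
  also have "\<dots> = integral\<^sup>L (PiM ((I - J) \<union> J) M) ?g"
    using fJ gi IJ by (intro product_integral_fold[symmetric]) auto
  finally show ?thesis by (simp only: IJ)
qed

context
  fixes M :: "'i \<Rightarrow> real measure" and J :: "'i set" and w :: "'i \<Rightarrow> real"
  assumes M: "\<And>i. prob_space (M i)" and finJ: "finite J"
    and MJ: "\<And>j. j \<in> J \<Longrightarrow> M j = gaussian 0 (w j)" and wnn: "\<And>j. j \<in> J \<Longrightarrow> 0 \<le> w j"
begin

lemma pim_comp_meas: "j \<in> J \<Longrightarrow> (\<lambda>x. x j) \<in> borel_measurable (PiM J M)"
proof -
  assume j: "j \<in> J"
  have "(\<lambda>x. x j) \<in> measurable (PiM J M) (M j)"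
    using j by (intro measurable_component_singleton) auto
  then show ?thesis
    using MJ[OF j] wnn[OF j] by (simp cong: measurable_cong_sets)
qed

lemma pim_single:
  fixes g :: "real \<Rightarrow> real"
  assumes j: "j \<in> J" and g: "g \<in> borel_measurable borel"
  shows "integral\<^sup>L (PiM J M) (\<lambda>x. g (x j)) = integral\<^sup>L (M j) g"
    and "integrable (PiM J M) (\<lambda>x. g (x j)) \<longleftrightarrow> integrable (M j) g"
proof -
  have d: "distr (PiM J M) (M j) (\<lambda>x. x j) = M j"
    using j M by (intro distr_PiM_component) auto
  have m: "(\<lambda>x. x j) \<in> measurable (PiM J M) (M j)"
    using j by (intro measurable_component_singleton) auto
  have g': "g \<in> borel_measurable (M j)"
    using g MJ[OF j] wnn[OF j] by (simp cong: measurable_cong_sets)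
  show "integral\<^sup>L (PiM J M) (\<lambda>x. g (x j)) = integral\<^sup>L (M j) g"
    using integral_distr[OF m g'] d by simp
  show "integrable (PiM J M) (\<lambda>x. g (x j)) \<longleftrightarrow> integrable (M j) g"
    using integrable_distr_eq[OF m g'] d by simp
qed

lemma pim_power_integrable: "j \<in> J \<Longrightarrow> integrable (PiM J M) (\<lambda>x. (x j) ^ k)"
  using pim_single(2)[of j "\<lambda>y. y ^ k"] integrable_gaussian_power[of "w j" k] MJ wnn by auto

lemma pim_moment2: "j \<in> J \<Longrightarrow> (\<integral>x. (x j)\<^sup>2 \<partial>PiM J M) = w j"
  using pim_single(1)[of j "\<lambda>y. y\<^sup>2"] gaussian_moment2[of "w j"] MJ wnn by auto

lemma pim_moment4: "j \<in> J \<Longrightarrow> (\<integral>x. (x j) ^ 4 \<partial>PiM J M) = 3 * (w j)\<^sup>2"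
  using pim_single(1)[of j "\<lambda>y. y ^ 4"] gaussian_moment4[of "w j"] MJ wnn by auto

lemma pim_pair:
  assumes p: "p \<in> J" and q: "q \<in> J"
  shows "integrable (PiM J M) (\<lambda>x. x p * x q)"
    and "(\<integral>x. x p * x q \<partial>PiM J M) = (if p = q then w p else 0)"
proof -
  interpret product_prob_space M J
    by (simp add: product_prob_space_def product_prob_space_axioms_def product_sigma_finite_def M prob_space_imp_sigma_finite)
  have "integrable (PiM J M) (\<lambda>x. x p * x q) \<and> (\<integral>x. x p * x q \<partial>PiM J M) = (if p = q then w p else 0)"
  proof (cases "p = q")
    case True
    then show ?thesis using pim_power_integrable[OF p, of 2] pim_moment2[OF p]
      by (simp add: power2_eq_square)
  next
    case False
    define f where "f l y = (if l = p \<or> l = q then y else (1::real))" for l y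
    have eq: "(\<Prod>l\<in>J. f l (x l)) = x p * x q" for x
    proof -
      have "(\<Prod>l\<in>J. f l (x l)) = (\<Prod>l\<in>{p, q}. f l (x l)) * (\<Prod>l\<in>J - {p, q}. f l (x l))"
        using p q finJ by (subst prod.subset_diff[of "{p,q}" J]) auto
      also have "(\<Prod>l\<in>J - {p, q}. f l (x l)) = 1"
        by (intro prod.neutral) (auto simp: f_def)
      finally show ?thesis using False by (simp add: f_def)
    qed
    have fi: "integrable (M l) (f l)" if l: "l \<in> J" for l
    proof (cases "l = p \<or> l = q")
      case True
      then have "f l = (\<lambda>y. y)" by (auto simp: f_def fun_eq_iff)
      then show ?thesis using integrable_gaussian_power[of "w l" 1] MJ[OF l] wnn[OF l] by simp
    next
      case False
      then have "f l = (\<lambda>y. 1)" by (auto simp: f_def fun_eq_iff)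
      then show ?thesis using finite_measure.integrable_const[OF prob_space.finite_measure[OF M]] by simp
    qed
    have "integrable (PiM J M) (\<lambda>x. \<Prod>l\<in>J. f l (x l))"
      by (intro product_integrable_prod finJ fi)
    moreover have "(\<integral>x. (\<Prod>l\<in>J. f l (x l)) \<partial>PiM J M) = (\<Prod>l\<in>J. integral\<^sup>L (M l) (f l))"
      by (intro product_integral_prod finJ fi)
    moreover have "(\<Prod>l\<in>J. integral\<^sup>L (M l) (f l)) = 0"
    proof -
      have "f p = (\<lambda>y. y)" by (auto simp: f_def fun_eq_iff)
      then have "integral\<^sup>L (M p) (f p) = 0"
        using MJ[OF p] wnn[OF p] gaussian_moment1[of "w p"] by simp
      then show ?thesis using p finJ by (intro prod_zero bexI[of _ p]) auto
    qed
    ultimately show ?thesis using False by (simp add: eq)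
  qed
  then show "integrable (PiM J M) (\<lambda>x. x p * x q)"
    and "(\<integral>x. x p * x q \<partial>PiM J M) = (if p = q then w p else 0)" by auto
qed

lemma pim_linsq:
  assumes P: "P \<subseteq> J"
  shows "integrable (PiM J M) (\<lambda>x. (\<Sum>p\<in>P. r p * x p)\<^sup>2)"
    and "(\<integral>x. (\<Sum>p\<in>P. r p * x p)\<^sup>2 \<partial>PiM J M) = (\<Sum>p\<in>P. w p * (r p)\<^sup>2)"
proof -
  have finP: "finite P" using P finJ finite_subset by auto
  have eq: "(\<Sum>p\<in>P. r p * x p)\<^sup>2 = (\<Sum>p\<in>P. \<Sum>q\<in>P. (r p * r q) * (x p * x q))" for x
    by (simp add: power2_eq_square sum_product mult_ac)
  show "integrable (PiM J M) (\<lambda>x. (\<Sum>p\<in>P. r p * x p)\<^sup>2)"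
    unfolding eq
  proof (intro Bochner_Integration.integrable_sum)
    fix p q assume "p \<in> P" "q \<in> P"
    then show "integrable (PiM J M) (\<lambda>x. r p * r q * (x p * x q))"
      using P pim_pair(1)[of p q] by (intro integrable_mult_right) auto
  qed
  have "(\<integral>x. (\<Sum>p\<in>P. r p * x p)\<^sup>2 \<partial>PiM J M) = (\<Sum>p\<in>P. \<Sum>q\<in>P. (r p * r q) * (if p = q then w p else 0))"
  proof -
    have pq: "p \<in> P \<Longrightarrow> q \<in> P \<Longrightarrow> integrable (PiM J M) (\<lambda>x. r p * r q * (x p * x q))" for p q
      using P pim_pair(1)[of p q] by (intro integrable_mult_right) auto
    have "(\<integral>x. (\<Sum>p\<in>P. \<Sum>q\<in>P. r p * r q * (x p * x q)) \<partial>PiM J M)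
        = (\<Sum>p\<in>P. (\<integral>x. (\<Sum>q\<in>P. r p * r q * (x p * x q)) \<partial>PiM J M))"
      by (rule Bochner_Integration.integral_sum) (intro Bochner_Integration.integrable_sum pq)
    also have "\<dots> = (\<Sum>p\<in>P. \<Sum>q\<in>P. (\<integral>x. r p * r q * (x p * x q) \<partial>PiM J M))"
      by (intro sum.cong refl Bochner_Integration.integral_sum pq)
    also have "\<dots> = (\<Sum>p\<in>P. \<Sum>q\<in>P. r p * r q * (if p = q then w p else 0))"
      using P by (intro sum.cong refl) (auto simp: pim_pair(2) subsetD)
    finally show ?thesis unfolding eq .
  qed
  also have "\<dots> = (\<Sum>p\<in>P. w p * (r p)\<^sup>2)"
    using finP by (simp add: if_distrib[where f="\<lambda>z. _ * z"] sum.If_cases power2_eq_square mult_ac cong: if_cong)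
  finally show "(\<integral>x. (\<Sum>p\<in>P. r p * x p)\<^sup>2 \<partial>PiM J M) = (\<Sum>p\<in>P. w p * (r p)\<^sup>2)" .
qed

end


lemma pim_indep_coords:
  assumes M: "\<And>i. prob_space (M i)" and sp: "\<And>i. space (M i) = UNIV" and J: "J \<noteq> {}"
  shows "prob_space.indep_vars (PiM J M) M (\<lambda>i x. x i) J"
proof -
  interpret P: prob_space "PiM J M" by (intro prob_space_PiM M)
  have rv: "(\<lambda>x. x i) \<in> measurable (PiM J M) (M i)" for i
  proof (cases "i \<in> J")
    case True
    then show ?thesis by (intro measurable_component_singleton)
  next
    case False
    have "(\<lambda>x. undefined) \<in> measurable (PiM J M) (M i)"
      using sp[of i] by (intro measurable_const) auto
    then show ?thesis
      by (rule measurable_cong[THEN iffD1, rotated]) (use False in \<open>auto simp: space_PiM PiE_def extensional_def\<close>)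
  qed
  have d1: "distr (PiM J M) (PiM J M) (\<lambda>x. \<lambda>i\<in>J. x i) = PiM J M"
  proof -
    have "distr (PiM J M) (PiM J M) (\<lambda>x. \<lambda>i\<in>J. x i) = distr (PiM J M) (PiM J M) (\<lambda>x. x)"
      by (intro distr_cong) (auto simp: space_PiM)
    then show ?thesis by simp
  qed
  have d2: "(PiM J (\<lambda>i. distr (PiM J M) (M i) (\<lambda>x. x i))) = PiM J M"
    by (intro PiM_cong refl distr_PiM_component M) auto
  show ?thesis
    by (subst P.indep_vars_iff_distr_eq_PiM[OF J rv]) (simp add: d1 d2)
qed

lemma pim_block_indep:
  fixes f g :: "('i \<Rightarrow> real) \<Rightarrow> real"
  assumes M: "\<And>i. prob_space (M i)" and sp: "\<And>i. space (M i) = UNIV" and J: "J \<noteq> {}"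
    and AB: "A \<subseteq> J" "B \<subseteq> J" "A \<inter> B = {}"
    and f: "f \<in> borel_measurable (PiM A M)" and g: "g \<in> borel_measurable (PiM B M)"
  shows "prob_space.indep_var (PiM J M) borel (\<lambda>x. f (restrict x A)) borel (\<lambda>x. g (restrict x B))"
proof -
  interpret P: prob_space "PiM J M" by (intro prob_space_PiM M)
  have "P.indep_var (PiM A M) (\<lambda>x. restrict (\<lambda>i. x i) A) (PiM B M) (\<lambda>x. restrict (\<lambda>i. x i) B)"
    using AB by (intro P.indep_var_restrict[OF pim_indep_coords[OF M sp J]]) auto
  from P.indep_var_compose[OF this f g] show ?thesis by (simp add: comp_def)
qed

lemma pim_block_var:
  fixes Y :: "'a \<Rightarrow> ('i \<Rightarrow> real) \<Rightarrow> real"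
  assumes M: "\<And>i. prob_space (M i)" and sp: "\<And>i. space (M i) = UNIV" and J: "J \<noteq> {}"
    and S: "finite S" and B: "\<And>a. a \<in> S \<Longrightarrow> B a \<subseteq> J"
    and disj: "\<And>a b. a \<in> S \<Longrightarrow> b \<in> S \<Longrightarrow> a \<noteq> b \<Longrightarrow> B a \<inter> B b = {}"
    and Ym: "\<And>a. a \<in> S \<Longrightarrow> Y a \<in> borel_measurable (PiM (B a) M)"
    and dep: "\<And>a x. a \<in> S \<Longrightarrow> Y a x = Y a (restrict x (B a))"
    and int1: "\<And>a. a \<in> S \<Longrightarrow> integrable (PiM J M) (Y a)"
    and int2: "\<And>a. a \<in> S \<Longrightarrow> integrable (PiM J M) (\<lambda>x. (Y a x)\<^sup>2)"
    and mean0: "\<And>a. a \<in> S \<Longrightarrow> integral\<^sup>L (PiM J M) (Y a) = 0"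
  shows "(\<integral>x. (\<Sum>a\<in>S. Y a x)\<^sup>2 \<partial>PiM J M) = (\<Sum>a\<in>S. \<integral>x. (Y a x)\<^sup>2 \<partial>PiM J M)"
proof -
  interpret P: prob_space "PiM J M" by (intro prob_space_PiM M)
  have ind: "P.indep_var borel (Y a) borel (Y b)" if "a \<in> S" "b \<in> S" "a \<noteq> b" for a b
  proof -
    have "P.indep_var borel (\<lambda>x. Y a (restrict x (B a))) borel (\<lambda>x. Y b (restrict x (B b)))"
      using that by (intro pim_block_indep[OF M sp J] B disj Ym)
    moreover have "(\<lambda>x. Y a (restrict x (B a))) = Y a" "(\<lambda>x. Y b (restrict x (B b))) = Y b"
      using that by (auto simp: fun_eq_iff dep[symmetric])
    ultimately show ?thesis by simp
  qed
  have intab: "integrable (PiM J M) (\<lambda>x. Y a x * Y b x)" if "a \<in> S" "b \<in> S" for a b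
  proof (cases "a = b")
    case True then show ?thesis using int2[OF that(1)] by (simp add: power2_eq_square)
  next
    case False then show ?thesis using ind[OF that False] int1 that by (intro P.indep_var_integrable) auto
  qed
  have eq: "(\<Sum>a\<in>S. Y a x)\<^sup>2 = (\<Sum>a\<in>S. \<Sum>b\<in>S. Y a x * Y b x)" for x
    by (simp add: power2_eq_square sum_product)
  have "(\<integral>x. (\<Sum>a\<in>S. \<Sum>b\<in>S. Y a x * Y b x) \<partial>PiM J M) = (\<Sum>a\<in>S. \<integral>x. (\<Sum>b\<in>S. Y a x * Y b x) \<partial>PiM J M)"
    by (rule Bochner_Integration.integral_sum) (intro Bochner_Integration.integrable_sum intab)
  also have "\<dots> = (\<Sum>a\<in>S. \<Sum>b\<in>S. \<integral>x. Y a x * Y b x \<partial>PiM J M)"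
    by (intro sum.cong refl Bochner_Integration.integral_sum intab)
  also have "\<dots> = (\<Sum>a\<in>S. \<Sum>b\<in>S. if a = b then \<integral>x. (Y a x)\<^sup>2 \<partial>PiM J M else 0)"
  proof (intro sum.cong refl)
    fix a b assume ab: "a \<in> S" "b \<in> S"
    show "(\<integral>x. Y a x * Y b x \<partial>PiM J M) = (if a = b then \<integral>x. (Y a x)\<^sup>2 \<partial>PiM J M else 0)"
    proof (cases "a = b")
      case True then show ?thesis by (simp add: power2_eq_square)
    next
      case False
      then show ?thesis using P.indep_var_lebesgue_integral[OF ind[OF ab False] int1 int1] ab mean0 by simp
    qed
  qed
  also have "\<dots> = (\<Sum>a\<in>S. \<integral>x. (Y a x)\<^sup>2 \<partial>PiM J M)"
    using S by (simp add: sum.delta)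
  finally show ?thesis unfolding eq .
qed


fun chn :: "(nat \<Rightarrow> nat \<Rightarrow> nat \<Rightarrow> real) \<Rightarrow> (nat \<Rightarrow> nat) \<Rightarrow> nat \<Rightarrow> nat \<Rightarrow> nat \<Rightarrow> nat \<Rightarrow> real" where
  "chn M e k 0 u v = (if u = v then 1 else 0)"
| "chn M e k (Suc m) u v = (\<Sum>c<e (k + m). chn M e k m u c * M (k + m) c v)"

lemma chn_front:
  assumes "u < e k" "v < e (Suc k + m)"
  shows "chn M e k (Suc m) u v = (\<Sum>c<e (Suc k). M k u c * chn M e (Suc k) m c v)"
  using assms(2)
proof (induction m arbitrary: v)
  case 0
  have "chn M e k (Suc 0) u v = (\<Sum>c<e k. if c = u then M k c v else 0)"
    by (auto intro!: sum.cong simp del: sum.delta sum.delta')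
  also have "\<dots> = M k u v" using assms(1) by (simp add: sum.delta)
  also have "\<dots> = (\<Sum>c<e (Suc k). if c = v then M k u c else 0)"
    using 0 by (simp add: sum.delta)
  also have "\<dots> = (\<Sum>c<e (Suc k). M k u c * chn M e (Suc k) 0 c v)"
    by (auto intro!: sum.cong simp del: sum.delta sum.delta')
  finally show ?case .
next
  case (Suc m)
  have "chn M e k (Suc (Suc m)) u v = (\<Sum>c<e (k + Suc m). chn M e k (Suc m) u c * M (k + Suc m) c v)"
    by simp
  also have "\<dots> = (\<Sum>c<e (k + Suc m). (\<Sum>c'<e (Suc k). M k u c' * chn M e (Suc k) m c' c) * M (k + Suc m) c v)"
    by (intro sum.cong refl, subst Suc.IH) auto
  also have "\<dots> = (\<Sum>c'<e (Suc k). M k u c' * (\<Sum>c<e (Suc k + m). chn M e (Suc k) m c' c * M (Suc k + m) c v))"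
    by (simp add: sum_distrib_left sum_distrib_right mult_ac sum.swap[of _ "{..<e (Suc k)}"])
  also have "\<dots> = (\<Sum>c'<e (Suc k). M k u c' * chn M e (Suc k) (Suc m) c' v)"
    by simp
  finally show ?case .
qed

lemma chn_cong:
  assumes "\<And>i a b. k \<le> i \<Longrightarrow> i < k + m \<Longrightarrow> a < e i \<Longrightarrow> b < e (Suc i) \<Longrightarrow> M i a b = M' i a b"
    and "v < e (k + m)"
  shows "chn M e k m u v = chn M' e k m u v"
  using assms
proof (induction m arbitrary: v)
  case 0
  then show ?case by simp
next
  case (Suc m)
  have "chn M e k m u c = chn M' e k m u c" if "c < e (k + m)" for c
    using Suc.prems that by (intro Suc.IH) auto
  moreover have "M (k + m) c v = M' (k + m) c v" if "c < e (k + m)" for c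
    using Suc.prems that by (intro Suc.prems(1)) auto
  ultimately show ?case by (auto intro!: sum.cong)
qed

lemma chn_cong_e:
  assumes "\<And>i. k \<le> i \<Longrightarrow> i < k + m \<Longrightarrow> e i = e' i"
  shows "chn M e k m u v = chn M e' k m u v"
  using assms
proof (induction m arbitrary: v)
  case 0
  then show ?case by simp
next
  case (Suc m)
  have "e (k + m) = e' (k + m)" using Suc.prems by auto
  moreover have "chn M e k m u c = chn M e' k m u c" for c
    using Suc.prems by (intro Suc.IH) auto
  ultimately show ?case by simp
qed

lemma sum_PiE_insert:
  fixes G :: "('a \<Rightarrow> 'b) \<Rightarrow> real"
  assumes "x \<notin> A"
  shows "(\<Sum>g\<in>PiE (insert x A) B. G g) = (\<Sum>y\<in>B x. \<Sum>g\<in>PiE A B. G (g(x := y)))"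
proof -
  have "(\<Sum>g\<in>PiE (insert x A) B. G g) = (\<Sum>(y, g)\<in>B x \<times> PiE A B. G (g(x := y)))"
    using assms
    by (intro sum.reindex_bij_witness[of _ "\<lambda>(y,g). g(x := y)" "\<lambda>g. (g x, g(x := undefined))"])
       (auto simp: PiE_def extensional_def)
  also have "\<dots> = (\<Sum>y\<in>B x. \<Sum>g\<in>PiE A B. G (g(x := y)))"
    by (subst sum.cartesian_product) auto
  finally show ?thesis .
qed

lemma sum_PiE_chain:
  "(\<Sum>a\<in>PiE {..<Suc m} (\<lambda>i. {..<e i}). f (a 0) (a m) * (\<Prod>i<m. M i (a i) (a (Suc i))))
     = (\<Sum>u<e 0. \<Sum>v<e m. f u v * chn M e 0 m u v)"
proof (induction m arbitrary: f)
  case 0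
  have "(\<Sum>a\<in>PiE {..<Suc 0} (\<lambda>i. {..<e i}). f (a 0) (a 0)) = (\<Sum>u<e 0. f u u)"
    by (intro sum.reindex_bij_witness[of _ "\<lambda>u. (\<lambda>i\<in>{..<Suc 0}. u)" "\<lambda>a. a 0"])
       (auto simp: PiE_def extensional_def fun_eq_iff)
  also have "\<dots> = (\<Sum>u<e 0. \<Sum>v<e 0. f u v * chn M e 0 0 u v)"
    by (intro sum.cong refl) (simp add: if_distrib[where f="\<lambda>z. _ * z"] sum.delta cong: if_cong)
  finally show ?case by simp
next
  case (Suc m)
  define F where "F u v = (\<Sum>c<e (Suc m). f u c * M m v c)" for u v
  have "(\<Sum>a\<in>PiE {..<Suc (Suc m)} (\<lambda>i. {..<e i}). f (a 0) (a (Suc m)) * (\<Prod>i<Suc m. M i (a i) (a (Suc i))))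
      = (\<Sum>c<e (Suc m). \<Sum>g\<in>PiE {..<Suc m} (\<lambda>i. {..<e i}).
            f (g 0) c * ((\<Prod>i<m. M i (g i) (g (Suc i))) * M m (g m) c))"
  proof -
    have ins: "{..<Suc (Suc m)} = insert (Suc m) {..<Suc m}" by auto
    have pr: "(\<Prod>i<Suc m. M i ((g(Suc m := c)) i) ((g(Suc m := c)) (Suc i)))
        = (\<Prod>i<m. M i (g i) (g (Suc i))) * M m (g m) c" for g :: "nat \<Rightarrow> nat" and c
    proof -
      have "(\<Prod>i<m. M i ((g(Suc m := c)) i) ((g(Suc m := c)) (Suc i))) = (\<Prod>i<m. M i (g i) (g (Suc i)))"
        by (intro prod.cong refl) auto
      then show ?thesis by simp
    qed
    show ?thesis
      unfolding ins by (subst sum_PiE_insert) (auto simp: pr)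
  qed
  also have "\<dots> = (\<Sum>g\<in>PiE {..<Suc m} (\<lambda>i. {..<e i}). F (g 0) (g m) * (\<Prod>i<m. M i (g i) (g (Suc i))))"
    unfolding F_def by (subst sum.swap) (simp add: sum_distrib_right sum_distrib_left mult_ac)
  also have "\<dots> = (\<Sum>u<e 0. \<Sum>v<e m. F u v * chn M e 0 m u v)"
    by (rule Suc.IH)
  also have "\<dots> = (\<Sum>u<e 0. \<Sum>c<e (Suc m). f u c * chn M e 0 (Suc m) u c)"
  proof (rule sum.cong[OF refl])
    fix u
    have "(\<Sum>v<e m. F u v * chn M e 0 m u v) = (\<Sum>v<e m. \<Sum>c<e (Suc m). f u c * (chn M e 0 m u v * M m v c))"
      unfolding F_def by (simp add: sum_distrib_right sum_distrib_left mult_ac)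
    also have "\<dots> = (\<Sum>c<e (Suc m). \<Sum>v<e m. f u c * (chn M e 0 m u v * M m v c))"
      by (rule sum.swap)
    also have "\<dots> = (\<Sum>c<e (Suc m). f u c * chn M e 0 (Suc m) u c)"
      by (simp add: sum_distrib_left)
    finally show "(\<Sum>v<e m. F u v * chn M e 0 m u v) = (\<Sum>c<e (Suc m). f u c * chn M e 0 (Suc m) u c)" .
  qed
  finally show ?case .
qed


locale mps =
  fixes n :: nat and d :: "nat \<Rightarrow> nat" and \<phi> :: "nat \<Rightarrow> real \<Rightarrow> nat \<Rightarrow> real"
    and \<sigma> :: "nat \<Rightarrow> real" and x :: "nat \<Rightarrow> real"
  assumes n1: "1 \<le> n" and d1: "\<forall>i<n. 1 \<le> d i" and \<sigma>pos: "\<forall>i<n. 0 < \<sigma> i"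
begin

definition ph :: "nat \<Rightarrow> nat \<Rightarrow> real" where "ph i s = \<phi> i (x i) s"
definition cc :: "nat \<Rightarrow> real" where "cc i = (\<sigma> i)\<^sup>2 * (\<Sum>s<d i. (ph i s)\<^sup>2)"
definition var :: "(nat \<Rightarrow> nat) \<Rightarrow> nat \<Rightarrow> real" where
  "var D i = (\<sigma> i)\<^sup>2 / sqrt (real (D i) * real (D ((i + 1) mod n)))"
definition G :: "(nat \<Rightarrow> nat) \<Rightarrow> nat \<times> nat \<times> nat \<times> nat \<Rightarrow> real measure" where
  "G D = (\<lambda>(i, s, a, b). gaussian 0 (var D i))"
definition Bm :: "(nat \<times> nat \<times> nat \<times> nat \<Rightarrow> real) \<Rightarrow> nat \<Rightarrow> nat \<Rightarrow> nat \<Rightarrow> real" where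
  "Bm A i a b = (\<Sum>s<d i. A (i, s, a, b) * ph i s)"
definition chain :: "(nat \<Rightarrow> nat) \<Rightarrow> (nat \<times> nat \<times> nat \<times> nat \<Rightarrow> real) \<Rightarrow> nat \<Rightarrow> nat \<Rightarrow> nat \<Rightarrow> nat \<Rightarrow> real" where
  "chain D A = chn (Bm A) D"
definition Fr :: "(nat \<Rightarrow> nat) \<Rightarrow> (nat \<times> nat \<times> nat \<times> nat \<Rightarrow> real) \<Rightarrow> nat \<Rightarrow> real" where
  "Fr D A k = (\<Sum>u<D k. \<Sum>v<D (n - 1). (chain D A k (n - 1 - k) u v)\<^sup>2)"
definition Ck :: "nat \<Rightarrow> real" where "Ck k = cc (n - 1) * (\<Prod>i<k. cc i)"
definition V :: "(nat \<Rightarrow> nat) \<Rightarrow> nat \<Rightarrow> (nat \<times> nat \<times> nat \<times> nat \<Rightarrow> real) \<Rightarrow> real" where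
  "V D k A = Ck k / sqrt (real (D k) * real (D (n - 1))) * Fr D A k"

lemma var_nonneg: "0 \<le> var D i"
  by (simp add: var_def)

lemma prob_G: "prob_space (G D p)"
  by (cases p) (simp add: G_def prob_space_gaussian var_nonneg)

lemma space_G[simp]: "space (G D p) = UNIV"
  by (cases p) (simp add: G_def var_nonneg)

lemma sets_G: "sets (G D p) = sets borel"
  by (cases p) (simp add: G_def var_nonneg)

lemma entries_eq: "mps_entries n d \<sigma> D = PiM (mps_index n d D) (G D)"
  unfolding mps_entries_def G_def var_def ..

lemma cc_nonneg: "0 \<le> cc i" by (simp add: cc_def sum_nonneg)

lemma Ck_nonneg: "0 \<le> Ck k" by (simp add: Ck_def cc_nonneg prod_nonneg)

lemma Fr_nonneg: "0 \<le> Fr D A k" by (simp add: Fr_def sum_nonneg)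

lemma V_nonneg: "0 \<le> V D k A" by (simp add: V_def Ck_nonneg Fr_nonneg)

lemma coord_meas[measurable]: "(\<lambda>A. A p) \<in> borel_measurable (PiM K (G D))"
proof (cases "p \<in> K")
  case True
  have "(\<lambda>A. A p) \<in> measurable (PiM K (G D)) (G D p)"
    using True by (intro measurable_component_singleton)
  then show ?thesis by (simp add: sets_G cong: measurable_cong_sets)
next
  case False
  have "(\<lambda>A. undefined) \<in> borel_measurable (PiM K (G D))" by simp
  then show ?thesis
  proof (rule measurable_cong[THEN iffD1, rotated])
    fix w assume "w \<in> space (PiM K (G D))"
    then show "undefined = w p" using PiE_arb[of w K _ p] False by (simp add: space_PiM)
  qed
qed

lemma Bm_meas[measurable]: "(\<lambda>A. Bm A i a b) \<in> borel_measurable (PiM K (G D))"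
  unfolding Bm_def by measurable

lemma chain_meas[measurable]: "(\<lambda>A. chain D' A k m u v) \<in> borel_measurable (PiM K (G D))"
proof (induction m arbitrary: v)
  case 0
  then show ?case by (simp add: chain_def)
next
  case (Suc m)
  show ?case unfolding chain_def chn.simps
    using Suc.IH[unfolded chain_def] by measurable
qed

lemma Fr_meas[measurable]: "(\<lambda>A. Fr D' A k) \<in> borel_measurable (PiM K (G D))"
  unfolding Fr_def by measurable

lemma V_meas[measurable]: "V D' k \<in> borel_measurable (PiM K (G D))"
  unfolding V_def by measurable

lemma output_PiE:
  "mps_output n d \<phi> D A x = (\<Sum>a\<in>PiE {..<n} (\<lambda>i. {..<D i}). \<Prod>i<n. Bm A i (a i) (a ((i + 1) mod n)))"
proof -
  have "mps_output n d \<phi> D A x = (\<Sum>a\<in>PiE {..<n} (\<lambda>i. {..<D i}). \<Sum>s\<in>PiE {..<n} (\<lambda>i. {..<d i}).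
          \<Prod>i<n. A (i, s i, a i, a ((i + 1) mod n)) * ph i (s i))"
    unfolding mps_output_def ph_def by (subst sum.swap) (simp add: prod.distrib)
  also have "\<dots> = (\<Sum>a\<in>PiE {..<n} (\<lambda>i. {..<D i}). \<Prod>i<n. Bm A i (a i) (a ((i + 1) mod n)))"
    unfolding Bm_def by (intro sum.cong refl, subst prod_sum_PiE) auto
  finally show ?thesis .
qed

lemma trace:
  "mps_output n d \<phi> D A x = (\<Sum>u<D 0. \<Sum>v<D (n - 1). Bm A (n - 1) v u * chain D A 0 (n - 1) u v)"
proof -
  obtain n' where n': "n = Suc n'" using n1 by (cases n) auto
  have eq: "(\<Prod>i<n. Bm A i (a i) (a ((i + 1) mod n))) = Bm A n' (a n') (a 0) * (\<Prod>i<n'. Bm A i (a i) (a (Suc i)))"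
    for a :: "nat \<Rightarrow> nat"
  proof -
    have "(\<Prod>i<n'. Bm A i (a i) (a ((i + 1) mod n))) = (\<Prod>i<n'. Bm A i (a i) (a (Suc i)))"
      by (intro prod.cong refl) (simp add: n')
    then show ?thesis by (simp add: n' mult.commute)
  qed
  have "mps_output n d \<phi> D A x = (\<Sum>a\<in>PiE {..<n} (\<lambda>i. {..<D i}).
        Bm A n' (a n') (a 0) * (\<Prod>i<n'. Bm A i (a i) (a (Suc i))))"
    unfolding output_PiE by (intro sum.cong refl eq)
  also have "\<dots> = (\<Sum>a\<in>PiE {..<Suc n'} (\<lambda>i. {..<D i}).
        Bm A n' (a n') (a 0) * (\<Prod>i<n'. Bm A i (a i) (a (Suc i))))"
    by (simp add: n')
  also have "\<dots> = (\<Sum>u<D 0. \<Sum>v<D n'. Bm A n' v u * chain D A 0 n' u v)"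
    unfolding chain_def by (rule sum_PiE_chain[where f="\<lambda>u v. Bm A n' v u"])
  finally show ?thesis by (simp add: n')
qed

abbreviation Ix :: "(nat \<Rightarrow> nat) \<Rightarrow> (nat \<times> nat \<times> nat \<times> nat) set" where
  "Ix D \<equiv> mps_index n d D"

lemma finite_Ix: "finite (Ix D)"
proof -
  let ?S = "{..<n} \<times> (\<Union>i<n. {..<d i}) \<times> (\<Union>i<n. {..<D i}) \<times> (\<Union>i<n. {..<D i})"
  have "Ix D \<subseteq> ?S"
  proof
    fix p assume "p \<in> Ix D"
    then obtain i s a b where p: "p = (i, s, a, b)" "i < n" "s < d i" "a < D i" "b < D ((i + 1) mod n)"
      by (auto simp: mps_index_def)
    have "(i + 1) mod n < n" using n1 by simp
    then show "p \<in> ?S" using p by blast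
  qed
  moreover have "finite ?S" by auto
  ultimately show ?thesis by (rule finite_subset)
qed

lemma Bm_cong: "(\<And>s. s < d i \<Longrightarrow> A (i, s, a, b) = A' (i, s, a, b)) \<Longrightarrow> Bm A i a b = Bm A' i a b"
  unfolding Bm_def by (intro sum.cong) auto

lemma chain_cong_A:
  assumes "\<And>i s a b. k \<le> i \<Longrightarrow> i < k + m \<Longrightarrow> s < d i \<Longrightarrow> a < D i \<Longrightarrow> b < D (Suc i) \<Longrightarrow> A (i, s, a, b) = A' (i, s, a, b)"
    and "v < D (k + m)"
  shows "chain D A k m u v = chain D A' k m u v"
  unfolding chain_def using assms by (intro chn_cong Bm_cong) auto

lemma Fr_cong_A:
  assumes "k \<le> n - 1"
    and "\<And>i s a b. k \<le> i \<Longrightarrow> i < n - 1 \<Longrightarrow> s < d i \<Longrightarrow> a < D i \<Longrightarrow> b < D (Suc i) \<Longrightarrow> A (i, s, a, b) = A' (i, s, a, b)"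
  shows "Fr D A k = Fr D A' k"
proof -
  have e: "k + (n - 1 - k) = n - 1" "k + (n - Suc k) = n - Suc 0" using assms(1) by auto
  show ?thesis
    unfolding Fr_def using assms
    by (intro sum.cong refl arg_cong[where f="\<lambda>z. z\<^sup>2"] chain_cong_A) (auto simp: e)
qed

lemma V_cong_A:
  assumes "k \<le> n - 1"
    and "\<And>i s a b. k \<le> i \<Longrightarrow> i < n - 1 \<Longrightarrow> s < d i \<Longrightarrow> a < D i \<Longrightarrow> b < D (Suc i) \<Longrightarrow> A (i, s, a, b) = A' (i, s, a, b)"
  shows "V D k A = V D k A'"
  unfolding V_def using Fr_cong_A[of k D A A', OF assms] by simp

lemma in_Ix: "i < n - 1 \<Longrightarrow> s < d i \<Longrightarrow> a < D i \<Longrightarrow> b < D (Suc i) \<Longrightarrow> (i, s, a, b) \<in> Ix D"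
  by (simp add: mps_index_def)

lemma V_restrict: "k \<le> n - 1 \<Longrightarrow> V D k A = V D k (restrict A (Ix D))"
  by (intro V_cong_A) (auto simp: in_Ix)

definition Jl :: "(nat \<Rightarrow> nat) \<Rightarrow> (nat \<times> nat \<times> nat \<times> nat) set" where
  "Jl D = (\<lambda>(s, v, u). (n - 1, s, v, u)) ` ({..<d (n - 1)} \<times> {..<D (n - 1)} \<times> {..<D 0})"

lemma Jl_sub: "Jl D \<subseteq> Ix D"
  using n1 by (auto simp: Jl_def mps_index_def)

definition cfl :: "(nat \<Rightarrow> nat) \<Rightarrow> nat \<times> nat \<times> nat \<times> nat \<Rightarrow> (nat \<times> nat \<times> nat \<times> nat \<Rightarrow> real) \<Rightarrow> real" where
  "cfl D j A = (case j of (i, s, v, u) \<Rightarrow> ph (n - 1) s * chain D A 0 (n - 1) u v)"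

lemma output_lin: "mps_output n d \<phi> D A x = (\<Sum>j\<in>Jl D. A j * cfl D j A)"
proof -
  have inj: "inj_on (\<lambda>(s, v, u). (n - 1, s, v, u)) X" for X :: "(nat \<times> nat \<times> nat) set"
    by (auto simp: inj_on_def)
  have "(\<Sum>j\<in>Jl D. A j * cfl D j A)
      = (\<Sum>s<d (n - 1). \<Sum>v<D (n - 1). \<Sum>u<D 0. A (n - 1, s, v, u) * (ph (n - 1) s * chain D A 0 (n - 1) u v))"
    unfolding Jl_def by (subst sum.reindex[OF inj]) (simp add: sum.cartesian_product' cfl_def)
  also have "\<dots> = (\<Sum>u<D 0. \<Sum>v<D (n - 1). Bm A (n - 1) v u * chain D A 0 (n - 1) u v)"
    unfolding Bm_def sum_distrib_right
    by (subst sum.swap, subst (2) sum.swap, subst sum.swap) (simp add: mult_ac)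
  finally show ?thesis using trace by simp
qed

lemma cfl_sq: "(\<Sum>j\<in>Jl D. var D (n - 1) * (cfl D j A)\<^sup>2) = V D 0 A"
proof -
  have inj: "inj_on (\<lambda>(s, v, u). (n - 1, s, v, u)) X" for X :: "(nat \<times> nat \<times> nat) set"
    by (auto simp: inj_on_def)
  have "(\<Sum>j\<in>Jl D. var D (n - 1) * (cfl D j A)\<^sup>2)
      = var D (n - 1) * (\<Sum>s<d (n - 1). \<Sum>v<D (n - 1). \<Sum>u<D 0. (ph (n - 1) s)\<^sup>2 * (chain D A 0 (n - 1) u v)\<^sup>2)"
    unfolding Jl_def
    by (subst sum.reindex[OF inj]) (simp add: sum.cartesian_product' cfl_def sum_distrib_left power_mult_distrib)
  also have "\<dots> = var D (n - 1) * (\<Sum>s<d (n - 1). (ph (n - 1) s)\<^sup>2) * Fr D A 0"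
    unfolding Fr_def by (simp add: sum_distrib_left sum_distrib_right sum.swap[of _ "{..<D 0}"] mult_ac)
  also have "\<dots> = V D 0 A"
    using n1 by (simp add: V_def Ck_def cc_def var_def mult_ac)
  finally show ?thesis .
qed

lemma char_L:
  "char (mps_law n d \<phi> \<sigma> x D) t
     = (\<integral>A. complex_of_real (exp (- (t\<^sup>2 * V D 0 A) / 2)) \<partial>PiM (Ix D) (G D))"
proof -
  have meas: "(\<lambda>A. mps_output n d \<phi> D A x) \<in> borel_measurable (PiM (Ix D) (G D))"
    unfolding trace by measurable
  have "char (mps_law n d \<phi> \<sigma> x D) t = (\<integral>A. iexp (t * mps_output n d \<phi> D A x) \<partial>PiM (Ix D) (G D))"
    unfolding char_def mps_law_def entries_eq using meas by (simp add: integral_distr)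
  also have "\<dots> = (\<integral>A. iexp (t * (\<Sum>j\<in>Jl D. A j * cfl D j A)) \<partial>PiM (Ix D) (G D))"
    by (simp add: output_lin)
  also have "\<dots> = (\<integral>A. complex_of_real (exp (- (t\<^sup>2 * (\<Sum>j\<in>Jl D. var D (n - 1) * (cfl D j A)\<^sup>2)) / 2)) \<partial>PiM (Ix D) (G D))"
  proof (rule gauss_cond[OF prob_G finite_Ix Jl_sub])
    fix j assume j: "j \<in> Jl D"
    then show "G D j = gaussian 0 (var D (n - 1))" by (auto simp: Jl_def G_def)
    show "0 \<le> var D (n - 1)" by (rule var_nonneg)
    obtain s v u where juv: "j = (n - 1, s, v, u)" using j by (auto simp: Jl_def)
    have "cfl D j = (\<lambda>A. ph (n - 1) s * chain D A 0 (n - 1) u v)"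
      by (simp add: fun_eq_iff cfl_def juv)
    then show "cfl D j \<in> borel_measurable (PiM (Ix D - Jl D) (G D))"
      by simp
    fix A
    show "cfl D j A = cfl D j (restrict A (Ix D - Jl D))"
      using j unfolding cfl_def
      by (auto intro!: arg_cong[where f="\<lambda>z. _ * z"] chain_cong_A simp: Jl_def in_Ix)
  qed
  finally show ?thesis unfolding cfl_sq .
qed

definition e0 :: "nat \<times> nat \<times> nat \<times> nat" where "e0 = (n, 0, 0, 0)"
definition Gx :: "(nat \<Rightarrow> nat) \<Rightarrow> nat \<times> nat \<times> nat \<times> nat \<Rightarrow> real measure" where
  "Gx D = (G D)(e0 := gaussian 0 1)"
definition mixm :: "(nat \<Rightarrow> nat) \<Rightarrow> nat \<Rightarrow> real measure" where
  "mixm D k = distr (PiM (insert e0 (Ix D)) (Gx D)) borel (\<lambda>A. A e0 * sqrt (V D k A))"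

lemma e0_notin: "e0 \<notin> Ix D"
  by (simp add: e0_def mps_index_def)

lemma prob_Gx: "prob_space (Gx D p)"
  by (simp add: Gx_def prob_G prob_space_gaussian)

lemma PiM_Gx: "PiM (Ix D) (Gx D) = PiM (Ix D) (G D)"
  using e0_notin by (intro PiM_cong refl) (auto simp: Gx_def)

lemma V_meas_Gx: "k \<le> n - 1 \<Longrightarrow> V D k \<in> borel_measurable (PiM (insert e0 (Ix D)) (Gx D))"
  by (rule measurable_dep_restrict[where J="Ix D"]) (auto simp: PiM_Gx intro: V_restrict)

lemma mix_meas: "k \<le> n - 1 \<Longrightarrow> (\<lambda>A. A e0 * sqrt (V D k A)) \<in> borel_measurable (PiM (insert e0 (Ix D)) (Gx D))"
proof -
  assume k: "k \<le> n - 1"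
  have "(\<lambda>A. A e0) \<in> measurable (PiM (insert e0 (Ix D)) (Gx D)) (Gx D e0)"
    by (intro measurable_component_singleton) auto
  then have "(\<lambda>A. A e0) \<in> borel_measurable (PiM (insert e0 (Ix D)) (Gx D))"
    by (simp add: Gx_def cong: measurable_cong_sets)
  then show ?thesis using V_meas_Gx[OF k] by measurable
qed

lemma real_distribution_mix: "k \<le> n - 1 \<Longrightarrow> real_distribution (mixm D k)"
  unfolding mixm_def
  by (intro prob_space.real_distribution_distr prob_space_PiM prob_Gx mix_meas)

lemma char_mix:
  assumes k: "k \<le> n - 1"
  shows "char (mixm D k) t = (\<integral>A. complex_of_real (exp (- (t\<^sup>2 * V D k A) / 2)) \<partial>PiM (Ix D) (G D))"
proof -
  let ?I = "insert e0 (Ix D)"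
  have fin: "finite ?I" using finite_Ix by simp
  have "char (mixm D k) t = (\<integral>A. iexp (t * (A e0 * sqrt (V D k A))) \<partial>PiM ?I (Gx D))"
    unfolding char_def mixm_def using mix_meas[OF k] by (simp add: integral_distr)
  also have "\<dots> = (\<integral>A. iexp (t * (\<Sum>j\<in>{e0}. A j * sqrt (V D k A))) \<partial>PiM ?I (Gx D))"
    by simp
  also have "\<dots> = (\<integral>A. complex_of_real (exp (- (t\<^sup>2 * (\<Sum>j\<in>{e0}. 1 * (sqrt (V D k A))\<^sup>2)) / 2)) \<partial>PiM ?I (Gx D))"
  proof (rule gauss_cond[OF prob_Gx fin])
    show "{e0} \<subseteq> ?I" by simp
    fix j assume j: "j \<in> {e0}"
    then show "Gx D j = gaussian 0 1" by (simp add: Gx_def)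
    show "(0::real) \<le> 1" by simp
    have eq: "?I - {e0} = Ix D" using e0_notin by auto
    show "(\<lambda>A. sqrt (V D k A)) \<in> borel_measurable (PiM (?I - {e0}) (Gx D))"
      unfolding eq PiM_Gx by measurable
    fix A
    show "sqrt (V D k A) = sqrt (V D k (restrict A (?I - {e0})))"
      unfolding eq using V_restrict[OF k] by simp
  qed
  also have "\<dots> = (\<integral>A. complex_of_real (exp (- (t\<^sup>2 * V D k A) / 2)) \<partial>PiM ?I (Gx D))"
    by (simp add: V_nonneg)
  also have "\<dots> = (\<integral>A. complex_of_real (exp (- (t\<^sup>2 * V D k A) / 2)) \<partial>PiM (Ix D) (Gx D))"
  proof (rule integral_PiM_restrict[OF prob_Gx fin])
    show "Ix D \<subseteq> ?I" by auto
    show "(\<lambda>A. complex_of_real (exp (- (t\<^sup>2 * V D k A) / 2))) \<in> borel_measurable (PiM (Ix D) (Gx D))"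
      unfolding PiM_Gx by measurable
    fix A
    show "complex_of_real (exp (- (t\<^sup>2 * V D k A) / 2)) = complex_of_real (exp (- (t\<^sup>2 * V D k (restrict A (Ix D))) / 2))"
      using V_restrict[OF k] by simp
  qed
  finally show ?thesis unfolding PiM_Gx .
qed

end


context mps
begin

definition Js :: "(nat \<Rightarrow> nat) \<Rightarrow> nat \<Rightarrow> (nat \<times> nat \<times> nat \<times> nat) set" where
  "Js D k = (\<lambda>(s, a, c). (k, s, a, c)) ` ({..<d k} \<times> {..<D k} \<times> {..<D (Suc k)})"
definition Jr :: "(nat \<Rightarrow> nat) \<Rightarrow> nat \<Rightarrow> nat \<Rightarrow> (nat \<times> nat \<times> nat \<times> nat) set" where
  "Jr D k a = (\<lambda>(s, c). (k, s, a, c)) ` ({..<d k} \<times> {..<D (Suc k)})"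
definition Lf :: "(nat \<Rightarrow> nat) \<Rightarrow> nat \<Rightarrow> (nat \<Rightarrow> nat \<Rightarrow> real) \<Rightarrow> (nat \<times> nat \<times> nat \<times> nat \<Rightarrow> real) \<Rightarrow> nat \<Rightarrow> nat \<Rightarrow> real" where
  "Lf D k R y a b = (\<Sum>c<D (Suc k). Bm y k a c * R c b)"
definition rr :: "nat \<Rightarrow> (nat \<Rightarrow> nat \<Rightarrow> real) \<Rightarrow> nat \<Rightarrow> nat \<times> nat \<times> nat \<times> nat \<Rightarrow> real" where
  "rr k R b p = (case p of (i, s, a, c) \<Rightarrow> ph k s * R c b)"
definition nR :: "(nat \<Rightarrow> nat) \<Rightarrow> nat \<Rightarrow> (nat \<Rightarrow> nat \<Rightarrow> real) \<Rightarrow> real" where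
  "nR D k R = (\<Sum>c<D (Suc k). \<Sum>b<D (n - 1). (R c b)\<^sup>2)"
definition S2 :: "nat \<Rightarrow> real" where
  "S2 k = (\<Sum>s<d k. (ph k s)\<^sup>2)"

lemma finite_Js: "finite (Js D k)" by (simp add: Js_def)
lemma finite_Jr: "finite (Jr D k a)" by (simp add: Jr_def)

lemma Jr_sub: "a < D k \<Longrightarrow> Jr D k a \<subseteq> Js D k"
  by (auto simp: Jr_def Js_def)

lemma Jr_disj: "a \<noteq> a' \<Longrightarrow> Jr D k a \<inter> Jr D k a' = {}"
  by (auto simp: Jr_def)

lemma card_Jr: "card (Jr D k a) = d k * D (Suc k)"
proof -
  have "inj_on (\<lambda>(s, c). (k, s, a, c)) X" for X :: "(nat \<times> nat) set"
    by (auto simp: inj_on_def)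
  then show ?thesis by (simp add: Jr_def card_image card_cartesian_product)
qed

lemma Js_sub: "Suc k < n \<Longrightarrow> Js D k \<subseteq> Ix D"
  by (auto simp: Js_def mps_index_def)

lemma G_Js: "p \<in> Js D k \<Longrightarrow> G D p = gaussian 0 (var D k)"
  by (auto simp: Js_def G_def)

lemma S2_nonneg: "0 \<le> S2 k" by (simp add: S2_def sum_nonneg)
lemma nR_nonneg: "0 \<le> nR D k R" by (simp add: nR_def sum_nonneg)

lemma Lf_lin: "Lf D k R y a b = (\<Sum>p\<in>Jr D k a. rr k R b p * y p)"
proof -
  have inj: "inj_on (\<lambda>(s, c). (k, s, a, c)) X" for X :: "(nat \<times> nat) set"
    by (auto simp: inj_on_def)
  have "(\<Sum>p\<in>Jr D k a. rr k R b p * y p) = (\<Sum>s<d k. \<Sum>c<D (Suc k). ph k s * R c b * y (k, s, a, c))"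
    unfolding Jr_def by (subst sum.reindex[OF inj]) (simp add: sum.cartesian_product' rr_def)
  also have "\<dots> = Lf D k R y a b"
    unfolding Lf_def Bm_def sum_distrib_right by (subst sum.swap) (simp add: mult_ac)
  finally show ?thesis by simp
qed

lemma rr_sq: "(\<Sum>b<D (n - 1). \<Sum>p\<in>Jr D k a. (rr k R b p)\<^sup>2) = S2 k * nR D k R"
proof -
  have inj: "inj_on (\<lambda>(s, c). (k, s, a, c)) X" for X :: "(nat \<times> nat) set"
    by (auto simp: inj_on_def)
  have "(\<Sum>b<D (n - 1). \<Sum>p\<in>Jr D k a. (rr k R b p)\<^sup>2) = (\<Sum>b<D (n - 1). \<Sum>s<d k. \<Sum>c<D (Suc k). (ph k s)\<^sup>2 * (R c b)\<^sup>2)"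
    unfolding Jr_def by (subst sum.reindex[OF inj]) (simp add: sum.cartesian_product' rr_def power_mult_distrib)
  also have "\<dots> = S2 k * nR D k R"
    unfolding S2_def nR_def sum_distrib_right sum_distrib_left
    by (subst sum.swap, subst (2) sum.swap) (simp add: sum.swap[of _ "{..<D (n - 1)}"])
  finally show ?thesis .
qed

lemma Lf_sq_bound:
  "(\<Sum>b<D (n - 1). (Lf D k R y a b)\<^sup>2) \<le> (\<Sum>p\<in>Jr D k a. (y p)\<^sup>2) * (S2 k * nR D k R)"
proof -
  have "(\<Sum>b<D (n - 1). (Lf D k R y a b)\<^sup>2) \<le> (\<Sum>b<D (n - 1). (\<Sum>p\<in>Jr D k a. (rr k R b p)\<^sup>2) * (\<Sum>p\<in>Jr D k a. (y p)\<^sup>2))"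
    unfolding Lf_lin by (intro sum_mono Cauchy_Schwarz_ineq_sum)
  also have "\<dots> = (\<Sum>p\<in>Jr D k a. (y p)\<^sup>2) * (\<Sum>b<D (n - 1). \<Sum>p\<in>Jr D k a. (rr k R b p)\<^sup>2)"
    by (simp add: sum_distrib_left mult.commute)
  also have "\<dots> = (\<Sum>p\<in>Jr D k a. (y p)\<^sup>2) * (S2 k * nR D k R)"
    by (simp only: rr_sq)
  finally show ?thesis .
qed

lemma inner_Lf:
  assumes a: "a < D k"
  shows "integrable (PiM (Js D k) (G D)) (\<lambda>y. (Lf D k R y a b)\<^sup>2)"
    and "(\<integral>y. (Lf D k R y a b)\<^sup>2 \<partial>PiM (Js D k) (G D)) = var D k * (\<Sum>p\<in>Jr D k a. (rr k R b p)\<^sup>2)"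
proof -
  have ctx: "\<And>i. prob_space (G D i)" "finite (Js D k)" "\<And>j. j \<in> Js D k \<Longrightarrow> G D j = gaussian 0 (var D k)"
    "\<And>j. j \<in> Js D k \<Longrightarrow> 0 \<le> var D k"
    by (auto simp: prob_G finite_Js G_Js var_nonneg)
  show "integrable (PiM (Js D k) (G D)) (\<lambda>y. (Lf D k R y a b)\<^sup>2)"
    unfolding Lf_lin using pim_linsq(1)[OF ctx Jr_sub[of a D k, OF a]] by simp
  show "(\<integral>y. (Lf D k R y a b)\<^sup>2 \<partial>PiM (Js D k) (G D)) = var D k * (\<Sum>p\<in>Jr D k a. (rr k R b p)\<^sup>2)"
    unfolding Lf_lin using pim_linsq(2)[OF ctx Jr_sub[of a D k, OF a]] by (simp add: sum_distrib_left)
qed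

definition Yf :: "(nat \<Rightarrow> nat) \<Rightarrow> nat \<Rightarrow> (nat \<Rightarrow> nat \<Rightarrow> real) \<Rightarrow> real \<Rightarrow> (nat \<times> nat \<times> nat \<times> nat \<Rightarrow> real) \<Rightarrow> nat \<Rightarrow> real" where
  "Yf D k R \<alpha> y a = \<alpha> * (\<Sum>b<D (n - 1). (Lf D k R y a b)\<^sup>2) - \<alpha> * var D k * S2 k * nR D k R"

lemma Lf_meas[measurable]: "(\<lambda>y. Lf D k R y a b) \<in> borel_measurable (PiM K (G D'))"
  unfolding Lf_def by measurable

lemma Yf_meas[measurable]: "(\<lambda>y. Yf D k R \<alpha> y a) \<in> borel_measurable (PiM K (G D'))"
  unfolding Yf_def by measurable

lemma Lf_restrict: "Lf D k R y a b = Lf D k R (restrict y (Jr D k a)) a b"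
  unfolding Lf_def by (intro sum.cong refl arg_cong[where f="\<lambda>z. z * _"] Bm_cong) (auto simp: Jr_def)

lemma Yf_restrict: "Yf D k R \<alpha> y a = Yf D k R \<alpha> (restrict y (Jr D k a)) a"
  unfolding Yf_def by (subst Lf_restrict) simp

context
  fixes D :: "nat \<Rightarrow> nat" and k a :: nat and R :: "nat \<Rightarrow> nat \<Rightarrow> real" and \<alpha> :: real
  assumes a: "a < D k" and \<alpha>: "0 \<le> \<alpha>"
begin

lemma ctxJs: "\<And>i. prob_space (G D i)" "finite (Js D k)" "\<And>j. j \<in> Js D k \<Longrightarrow> G D j = gaussian 0 (var D k)"
    "\<And>j. j \<in> Js D k \<Longrightarrow> 0 \<le> var D k"
  by (auto simp: prob_G finite_Js G_Js var_nonneg)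

lemma Yf_int: "integrable (PiM (Js D k) (G D)) (\<lambda>y. Yf D k R \<alpha> y a)"
proof -
  have "integrable (PiM (Js D k) (G D)) (\<lambda>y. \<alpha> * (\<Sum>b<D (n - 1). (Lf D k R y a b)\<^sup>2))"
    using inner_Lf(1)[of a D k, OF a] by (intro integrable_mult_right Bochner_Integration.integrable_sum) auto
  moreover have "integrable (PiM (Js D k) (G D)) (\<lambda>y. \<alpha> * var D k * S2 k * nR D k R)"
    by (intro finite_measure.integrable_const prob_space.finite_measure prob_space_PiM prob_G)
  ultimately show ?thesis unfolding Yf_def by (rule Bochner_Integration.integrable_diff)
qed

lemma Yf_mean: "(\<integral>y. Yf D k R \<alpha> y a \<partial>PiM (Js D k) (G D)) = 0"
proof -
  interpret P: prob_space "PiM (Js D k) (G D)" by (intro prob_space_PiM prob_G)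
  have "(\<integral>y. Yf D k R \<alpha> y a \<partial>PiM (Js D k) (G D))
      = \<alpha> * (\<Sum>b<D (n - 1). var D k * (\<Sum>p\<in>Jr D k a. (rr k R b p)\<^sup>2)) - \<alpha> * var D k * S2 k * nR D k R"
    unfolding Yf_def using inner_Lf[of a D k, OF a]
    by (subst Bochner_Integration.integral_diff)
       (auto intro!: integrable_mult_right Bochner_Integration.integrable_sum simp: Bochner_Integration.integral_sum P.prob_space)
  also have "\<dots> = 0"
  proof -
    have rr': "(\<Sum>b<D (n - Suc 0). \<Sum>p\<in>Jr D k a. (rr k R b p)\<^sup>2) = S2 k * nR D k R"
      using rr_sq[where D=D and k=k and a=a and R=R] by simp
    show ?thesis by (simp add: sum_distrib_left[symmetric] rr' mult_ac)
  qed
  finally show ?thesis .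
qed

lemma Yf_sq_le:
  fixes y :: "nat \<times> nat \<times> nat \<times> nat \<Rightarrow> real"
  shows "(Yf D k R \<alpha> y a)\<^sup>2 \<le> 2 * \<alpha>\<^sup>2 * (S2 k * nR D k R)\<^sup>2 * (real (card (Jr D k a)) * (\<Sum>p\<in>Jr D k a. (y p) ^ 4))
      + 2 * (\<alpha> * var D k * S2 k * nR D k R)\<^sup>2"
proof -
  let ?u = "\<alpha> * (\<Sum>b<D (n - 1). (Lf D k R y a b)\<^sup>2)" and ?v = "\<alpha> * var D k * S2 k * nR D k R"
  let ?q = "\<Sum>p\<in>Jr D k a. (y p)\<^sup>2"
  have 1: "(?u - ?v)\<^sup>2 \<le> 2 * ?u\<^sup>2 + 2 * ?v\<^sup>2"
  proof -
    have "0 \<le> (?u + ?v)\<^sup>2" by simp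
    then show ?thesis unfolding power2_eq_square by (simp add: algebra_simps)
  qed
  have u0: "0 \<le> ?u" using \<alpha> by (simp add: sum_nonneg)
  have "?u \<le> \<alpha> * (?q * (S2 k * nR D k R))"
    using Lf_sq_bound[of D k R y a] \<alpha> by (intro mult_left_mono) auto
  then have "?u\<^sup>2 \<le> (\<alpha> * (?q * (S2 k * nR D k R)))\<^sup>2"
    using u0 by (intro power_mono) auto
  also have "\<dots> = \<alpha>\<^sup>2 * (S2 k * nR D k R)\<^sup>2 * ?q\<^sup>2" by (simp add: power_mult_distrib mult_ac)
  also have "\<dots> \<le> \<alpha>\<^sup>2 * (S2 k * nR D k R)\<^sup>2 * (card (Jr D k a) * (\<Sum>p\<in>Jr D k a. (y p) ^ 4))"
  proof (intro mult_left_mono)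
    have "?q\<^sup>2 \<le> (\<Sum>p\<in>Jr D k a. ((y p)\<^sup>2)\<^sup>2) * card (Jr D k a)"
      by (rule sum_squared_le_sum_of_squares)
    then show "?q\<^sup>2 \<le> card (Jr D k a) * (\<Sum>p\<in>Jr D k a. (y p) ^ 4)"
      by (simp add: mult.commute power_mult[symmetric])
  qed auto
  finally show ?thesis using 1 unfolding Yf_def by linarith
qed

lemma Yf_sq:
  "integrable (PiM (Js D k) (G D)) (\<lambda>y. (Yf D k R \<alpha> y a)\<^sup>2)"
  "(\<integral>y. (Yf D k R \<alpha> y a)\<^sup>2 \<partial>PiM (Js D k) (G D)) \<le>
     2 * \<alpha>\<^sup>2 * (S2 k * nR D k R)\<^sup>2 * (card (Jr D k a) * (card (Jr D k a) * (3 * (var D k)\<^sup>2)))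
      + 2 * (\<alpha> * var D k * S2 k * nR D k R)\<^sup>2"
proof -
  interpret P: prob_space "PiM (Js D k) (G D)" by (intro prob_space_PiM prob_G)
  let ?g = "\<lambda>y::nat \<times> nat \<times> nat \<times> nat \<Rightarrow> real. 2 * \<alpha>\<^sup>2 * (S2 k * nR D k R)\<^sup>2 * (real (card (Jr D k a)) * (\<Sum>p\<in>Jr D k a. (y p) ^ 4))
      + 2 * (\<alpha> * var D k * S2 k * nR D k R)\<^sup>2"
  have sub: "Jr D k a \<subseteq> Js D k" using Jr_sub[of a D k] a by simp
  have p4: "p \<in> Jr D k a \<Longrightarrow> integrable (PiM (Js D k) (G D)) (\<lambda>y. (y p) ^ 4)" for p
    using sub by (intro pim_power_integrable[OF ctxJs]) auto
  have gi: "integrable (PiM (Js D k) (G D)) ?g"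
    using p4 by (intro Bochner_Integration.integrable_add integrable_mult_right Bochner_Integration.integrable_sum) auto
  show si: "integrable (PiM (Js D k) (G D)) (\<lambda>y. (Yf D k R \<alpha> y a)\<^sup>2)"
  proof (rule Bochner_Integration.integrable_bound[OF gi])
    show "(\<lambda>y. (Yf D k R \<alpha> y a)\<^sup>2) \<in> borel_measurable (PiM (Js D k) (G D))" by measurable
    show "AE y in PiM (Js D k) (G D). norm ((Yf D k R \<alpha> y a)\<^sup>2) \<le> norm (?g y)"
    proof (intro AE_I2)
      fix y :: "nat \<times> nat \<times> nat \<times> nat \<Rightarrow> real"
      have "(Yf D k R \<alpha> y a)\<^sup>2 \<le> ?g y" by (rule Yf_sq_le)
      then show "norm ((Yf D k R \<alpha> y a)\<^sup>2) \<le> norm (?g y)" by simp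
    qed
  qed
  have "(\<integral>y. (Yf D k R \<alpha> y a)\<^sup>2 \<partial>PiM (Js D k) (G D)) \<le> (\<integral>y. ?g y \<partial>PiM (Js D k) (G D))"
    using Yf_sq_le by (intro integral_mono si gi) auto
  also have "(\<integral>y. ?g y \<partial>PiM (Js D k) (G D)) = 2 * \<alpha>\<^sup>2 * (S2 k * nR D k R)\<^sup>2 * (card (Jr D k a) * (\<Sum>p\<in>Jr D k a. 3 * (var D k)\<^sup>2))
      + 2 * (\<alpha> * var D k * S2 k * nR D k R)\<^sup>2"
    using p4 sub
    by (subst Bochner_Integration.integral_add)
       (auto intro!: integrable_mult_right Bochner_Integration.integrable_sum
             simp: Bochner_Integration.integral_sum pim_moment4[OF ctxJs] subsetD P.prob_space)
  also have "\<dots> = 2 * \<alpha>\<^sup>2 * (S2 k * nR D k R)\<^sup>2 * (card (Jr D k a) * (card (Jr D k a) * (3 * (var D k)\<^sup>2)))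
      + 2 * (\<alpha> * var D k * S2 k * nR D k R)\<^sup>2"
    by simp
  finally show "(\<integral>y. (Yf D k R \<alpha> y a)\<^sup>2 \<partial>PiM (Js D k) (G D)) \<le>
     2 * \<alpha>\<^sup>2 * (S2 k * nR D k R)\<^sup>2 * (card (Jr D k a) * (card (Jr D k a) * (3 * (var D k)\<^sup>2)))
      + 2 * (\<alpha> * var D k * S2 k * nR D k R)\<^sup>2" .
qed

end

end


lemma nn_abs_bound:
  fixes Z :: "'a \<Rightarrow> real"
  assumes M: "prob_space M" and Z: "integrable M Z" and Z2: "integrable M (\<lambda>x. (Z x)\<^sup>2)"
    and Q: "(\<integral>x. (Z x)\<^sup>2 \<partial>M) \<le> Q" and \<delta>: "0 < \<delta>"
  shows "(\<integral>\<^sup>+x. ennreal \<bar>Z x\<bar> \<partial>M) \<le> ennreal (\<delta> / 2 + Q / (2 * \<delta>))"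
proof -
  interpret prob_space M by (rule M)
  have pw: "\<bar>Z x\<bar> \<le> \<delta> / 2 + (Z x)\<^sup>2 / (2 * \<delta>)" for x
  proof -
    have "0 \<le> (\<bar>Z x\<bar> - \<delta>)\<^sup>2" by simp
    then have "2 * \<delta> * \<bar>Z x\<bar> \<le> \<delta>\<^sup>2 + (Z x)\<^sup>2"
      by (simp add: power2_eq_square algebra_simps)
    then show ?thesis using \<delta> by (simp add: field_simps power2_eq_square)
  qed
  have gi: "integrable M (\<lambda>x. \<delta> / 2 + (Z x)\<^sup>2 / (2 * \<delta>))"
    using Z2 by (intro Bochner_Integration.integrable_add integrable_divide) auto
  have "(\<integral>\<^sup>+x. ennreal \<bar>Z x\<bar> \<partial>M) \<le> (\<integral>\<^sup>+x. ennreal (\<delta> / 2 + (Z x)\<^sup>2 / (2 * \<delta>)) \<partial>M)"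
    by (intro nn_integral_mono ennreal_leI pw)
  also have "\<dots> = ennreal (\<integral>x. \<delta> / 2 + (Z x)\<^sup>2 / (2 * \<delta>) \<partial>M)"
    using \<delta> by (intro nn_integral_eq_integral gi AE_I2) auto
  also have "(\<integral>x. \<delta> / 2 + (Z x)\<^sup>2 / (2 * \<delta>) \<partial>M) = \<delta> / 2 + (\<integral>x. (Z x)\<^sup>2 \<partial>M) / (2 * \<delta>)"
    using Z2 by (simp add: prob_space)
  also have "\<dots> \<le> \<delta> / 2 + Q / (2 * \<delta>)"
    using Q \<delta> by (simp add: divide_right_mono)
  finally show ?thesis by (simp add: ennreal_leI)
qed

lemma alg_bound:
  fixes m c2 R Q :: real
  assumes m: "0 < m" and c2: "0 \<le> c2" and R: "0 \<le> R" and Q: "Q \<le> c2 * R\<^sup>2 / m"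
  shows "(R + 1) / sqrt m / 2 + Q / (2 * ((R + 1) / sqrt m)) \<le> (1 + (1 + c2) * R) / (2 * sqrt m)"
proof -
  define s where "s = sqrt m"
  have s: "0 < s" "m = s\<^sup>2" using m by (auto simp: s_def)
  have "Q / (2 * ((R + 1) / s)) = Q * s / (2 * (R + 1))" using s R by (simp add: field_simps)
  also have "\<dots> \<le> (c2 * R\<^sup>2 / s\<^sup>2) * s / (2 * (R + 1))"
    using Q s R by (intro divide_right_mono mult_right_mono) auto
  also have "\<dots> = c2 * R * (R / (R + 1)) / (2 * s)"
    using s R by (simp add: field_simps power2_eq_square)
  also have "\<dots> \<le> c2 * R * 1 / (2 * s)"
    using s R c2 by (intro divide_right_mono mult_left_mono) auto
  finally have "Q / (2 * ((R + 1) / s)) \<le> c2 * R / (2 * s)" by simp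
  then have "(R + 1) / s / 2 + Q / (2 * ((R + 1) / s)) \<le> (R + 1) / (2 * s) + c2 * R / (2 * s)"
    by simp
  also have "\<dots> = (1 + (1 + c2) * R) / (2 * s)"
    using s by (simp add: add_divide_distrib[symmetric] algebra_simps)
  finally show ?thesis by (simp add: s_def)
qed

context mps
begin

abbreviation mg :: "(nat \<Rightarrow> nat) \<Rightarrow> nat \<Rightarrow> (nat \<times> nat \<times> nat \<times> nat \<Rightarrow> real) \<Rightarrow> (nat \<times> nat \<times> nat \<times> nat \<Rightarrow> real) \<Rightarrow> (nat \<times> nat \<times> nat \<times> nat \<Rightarrow> real)" where
  "mg D k X Y \<equiv> merge (Ix D - Js D k) (Js D k) (X, Y)"

definition Rm :: "(nat \<Rightarrow> nat) \<Rightarrow> nat \<Rightarrow> (nat \<times> nat \<times> nat \<times> nat \<Rightarrow> real) \<Rightarrow> nat \<Rightarrow> nat \<Rightarrow> real" where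
  "Rm D k X c b = chain D X (Suc k) (n - 2 - k) c b"

lemma fold_site:
  assumes k: "Suc k < n" and F: "F \<in> borel_measurable (PiM (Ix D) (G D))"
  shows "integral\<^sup>N (PiM (Ix D) (G D)) F
     = (\<integral>\<^sup>+X. (\<integral>\<^sup>+Y. F (mg D k X Y) \<partial>PiM (Js D k) (G D)) \<partial>PiM (Ix D - Js D k) (G D))"
proof -
  interpret product_sigma_finite "G D"
    by (simp add: product_sigma_finite_def prob_G prob_space_imp_sigma_finite)
  have IJ: "(Ix D - Js D k) \<union> Js D k = Ix D" using Js_sub[OF k] by auto
  have "integral\<^sup>N (PiM (Ix D) (G D)) F = integral\<^sup>N (PiM ((Ix D - Js D k) \<union> Js D k) (G D)) F"
    by (simp only: IJ)
  also have "\<dots> = (\<integral>\<^sup>+X. (\<integral>\<^sup>+Y. F (mg D k X Y) \<partial>PiM (Js D k) (G D)) \<partial>PiM (Ix D - Js D k) (G D))"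
  proof (rule product_nn_integral_fold)
    show "F \<in> borel_measurable (PiM (Ix D - Js D k \<union> Js D k) (G D))" unfolding IJ by (rule F)
  qed (auto simp: finite_Js finite_Ix)
  finally show ?thesis .
qed

lemma mg_Js: "p \<in> Js D k \<Longrightarrow> mg D k X Y p = Y p"
  by (simp add: merge_def)

lemma mg_out: "p \<in> Ix D \<Longrightarrow> p \<notin> Js D k \<Longrightarrow> mg D k X Y p = X p"
  by (simp add: merge_def)

lemma Bm_mg: "a < D k \<Longrightarrow> c < D (Suc k) \<Longrightarrow> Bm (mg D k X Y) k a c = Bm Y k a c"
  by (intro Bm_cong mg_Js) (auto simp: Js_def)

lemma Rm_mg:
  assumes k: "Suc k < n" and b: "b < D (n - 1)"
  shows "Rm D k (mg D k X Y) c b = Rm D k X c b"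
proof -
  define r where "r = n - Suc (Suc k)"
  have n: "n = Suc (Suc (k + r))" using k by (simp add: r_def)
  show ?thesis
    unfolding Rm_def using b
    by (intro chain_cong_A mg_out) (auto simp: mps_index_def Js_def n)
qed

lemma chain_split:
  assumes k: "Suc k < n" and a: "a < D k" and b: "b < D (n - 1)"
  shows "chain D (mg D k X Y) k (n - 1 - k) a b = Lf D k (Rm D k X) Y a b"
proof -
  define r where "r = n - Suc (Suc k)"
  have n: "n = Suc (Suc (k + r))" using k by (simp add: r_def)
  have e: "n - 1 - k = Suc (n - 2 - k)" "Suc k + (n - 2 - k) = n - 1" using k by (auto simp: n)
  have "chain D (mg D k X Y) k (n - 1 - k) a b
      = (\<Sum>c<D (Suc k). Bm (mg D k X Y) k a c * chain D (mg D k X Y) (Suc k) (n - 2 - k) c b)"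
  proof -
    have bb: "b < D (Suc k + (n - 2 - k))" using b by (simp only: e(2))
    show ?thesis unfolding chain_def e(1) by (rule chn_front[OF a bb])
  qed
  also have "\<dots> = Lf D k (Rm D k X) Y a b"
  proof -
    have r: "chain D (mg D k X Y) (Suc k) (n - 2 - k) c b = Rm D k X c b" for c
      using Rm_mg[where D=D and k=k and b=b and X=X and Y=Y and c=c, OF k b] unfolding Rm_def .
    show ?thesis unfolding Lf_def
      by (intro sum.cong refl) (simp only: Bm_mg[where D=D and k=k and a=a, OF a] r lessThan_iff)
  qed
  finally show ?thesis .
qed

lemma Fr_split:
  assumes k: "Suc k < n"
  shows "Fr D (mg D k X Y) k = (\<Sum>a<D k. \<Sum>b<D (n - 1). (Lf D k (Rm D k X) Y a b)\<^sup>2)"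
  unfolding Fr_def using k by (intro sum.cong refl arg_cong[where f="\<lambda>z. z\<^sup>2"] chain_split) auto

lemma Fr_Suc_nR: "Suc k < n \<Longrightarrow> Fr D X (Suc k) = nR D k (Rm D k X)"
proof -
  assume k: "Suc k < n"
  have e: "n - 1 - Suc k = n - 2 - k" by simp
  show ?thesis unfolding Fr_def nR_def Rm_def e ..
qed

lemma Fr_Suc_mg: "Suc k < n \<Longrightarrow> Fr D (mg D k X Y) (Suc k) = nR D k (Rm D k X)"
  unfolding Fr_Suc_nR nR_def by (intro sum.cong refl) (simp add: Rm_mg)

definition alp :: "(nat \<Rightarrow> nat) \<Rightarrow> nat \<Rightarrow> real" where
  "alp D k = Ck k / sqrt (real (D k) * real (D (n - 1)))"
definition c2 :: "(nat \<Rightarrow> nat) \<Rightarrow> nat \<Rightarrow> real" where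
  "c2 D k = (Ck k)\<^sup>2 * (\<sigma> k) ^ 4 * (S2 k)\<^sup>2 * (6 * (real (d k * D (Suc k)))\<^sup>2 + 2)
              / (real (D (n - 1)) * real (D (Suc k)))"

lemma alp_nonneg: "0 \<le> alp D k" by (simp add: alp_def Ck_nonneg)
lemma c2_nonneg: "0 \<le> c2 D k" by (simp add: c2_def)

lemma var_Suc: "Suc k < n \<Longrightarrow> var D k = (\<sigma> k)\<^sup>2 / sqrt (real (D k) * real (D (Suc k)))"
  by (simp add: var_def)

lemma Ck_Suc: "Ck (Suc k) = Ck k * cc k"
  by (simp add: Ck_def mult_ac)

lemma key_const:
  assumes k: "Suc k < n" and Dk: "0 < D k"
  shows "real (D k) * alp D k * var D k * S2 k = Ck (Suc k) / sqrt (real (D (Suc k)) * real (D (n - 1)))"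
proof -
  define q where "q = sqrt (real (D k))"
  define A where "A = sqrt (real (D (Suc k)))"
  define B where "B = sqrt (real (D (n - 1)))"
  have q: "0 < q" "q * q = real (D k)" using Dk by (auto simp: q_def)
  have al: "alp D k = Ck k / (q * B)" by (simp add: alp_def q_def B_def real_sqrt_mult)
  have va: "var D k = (\<sigma> k)\<^sup>2 / (q * A)" by (simp add: var_Suc[OF k] q_def A_def real_sqrt_mult)
  have "real (D k) * alp D k * var D k * S2 k = (q * q) * (Ck k / (q * B)) * ((\<sigma> k)\<^sup>2 / (q * A)) * S2 k"
    by (simp add: q al va)
  also have "\<dots> = Ck k * ((\<sigma> k)\<^sup>2 * S2 k) / (A * B)"
    using q Dk by (simp add: field_simps)
  also have "\<dots> = Ck (Suc k) / sqrt (real (D (Suc k)) * real (D (n - 1)))"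
    by (simp add: Ck_Suc cc_def S2_def A_def B_def real_sqrt_mult)
  finally show ?thesis .
qed

lemma Yf_sum:
  assumes k: "Suc k < n" and Dk: "0 < D k"
  shows "(\<Sum>a<D k. Yf D k (Rm D k X) (alp D k) Y a) = V D k (mg D k X Y) - V D (Suc k) (mg D k X Y)"
proof -
  have "(\<Sum>a<D k. Yf D k (Rm D k X) (alp D k) Y a)
      = alp D k * Fr D (mg D k X Y) k - real (D k) * alp D k * var D k * S2 k * nR D k (Rm D k X)"
    unfolding Yf_def Fr_split[OF k] by (simp add: sum_subtractf sum_distrib_left mult_ac)
  also have "\<dots> = V D k (mg D k X Y) - V D (Suc k) (mg D k X Y)"
  proof -
    have "real (D k) * alp D k * var D k * S2 k * nR D k (Rm D k X) = V D (Suc k) (mg D k X Y)"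
      unfolding key_const[where D=D and k=k, OF k Dk] V_def Fr_Suc_mg[OF k] by simp
    moreover have "alp D k * Fr D (mg D k X Y) k = V D k (mg D k X Y)"
      unfolding V_def alp_def by simp
    ultimately show ?thesis by simp
  qed
  finally show ?thesis .
qed

lemma Js_nonempty: "Suc k < n \<Longrightarrow> \<forall>i<n. 1 \<le> D i \<Longrightarrow> Js D k \<noteq> {}"
proof -
  assume k: "Suc k < n" and v: "\<forall>i<n. 1 \<le> D i"
  have "(k, 0, 0, 0) \<in> Js D k"
    using k v d1 unfolding Js_def
    by (intro image_eqI[of _ _ "(0, 0, 0)"]) (auto simp: Suc_le_eq)
  then show ?thesis by auto
qed

lemma inner_bound:
  assumes k: "Suc k < n" and v: "\<forall>i<n. 1 \<le> D i"
  shows "(\<integral>\<^sup>+Y. ennreal \<bar>V D k (mg D k X Y) - V D (Suc k) (mg D k X Y)\<bar> \<partial>PiM (Js D k) (G D))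
     \<le> ennreal ((1 + (1 + c2 D k) * nR D k (Rm D k X)) / (2 * sqrt (real (D k))))"
proof -
  let ?R = "Rm D k X" and ?\<alpha> = "alp D k" and ?M = "PiM (Js D k) (G D)"
  let ?Z = "\<lambda>Y. \<Sum>a<D k. Yf D k ?R ?\<alpha> Y a"
  interpret P: prob_space ?M by (intro prob_space_PiM prob_G)
  have Dk: "0 < D k" "1 \<le> D k" using k v by (auto simp: Suc_le_eq)
  have Z: "?Z Y = V D k (mg D k X Y) - V D (Suc k) (mg D k X Y)" for Y
    by (rule Yf_sum[where D=D and k=k, OF k Dk(1)])
  have Zi: "integrable ?M ?Z"
    using Yf_int[OF _ alp_nonneg] by (intro Bochner_Integration.integrable_sum) auto
  have Y2i: "a < D k \<Longrightarrow> integrable ?M (\<lambda>Y. (Yf D k ?R ?\<alpha> Y a)\<^sup>2)" for a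
    using Yf_sq(1)[OF _ alp_nonneg] by auto
  have var_eq: "(\<integral>Y. (?Z Y)\<^sup>2 \<partial>?M) = (\<Sum>a<D k. \<integral>Y. (Yf D k ?R ?\<alpha> Y a)\<^sup>2 \<partial>?M)"
  proof (rule pim_block_var[where B="Jr D k"])
    show "\<And>i. prob_space (G D i)" by (rule prob_G)
    show "\<And>i. space (G D i) = UNIV" by simp
    show "Js D k \<noteq> {}" by (rule Js_nonempty[OF k v])
  qed (auto simp: Jr_sub Jr_disj Yf_int[OF _ alp_nonneg] Yf_sq(1)[OF _ alp_nonneg] Yf_mean[OF _ alp_nonneg]
             intro: Yf_restrict)
  have Z2i: "integrable ?M (\<lambda>Y. (?Z Y)\<^sup>2)"
  proof (rule Bochner_Integration.integrable_bound)
    show "integrable ?M (\<lambda>Y. real (D k) * (\<Sum>a<D k. (Yf D k ?R ?\<alpha> Y a)\<^sup>2))"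
      using Y2i by (intro integrable_mult_right Bochner_Integration.integrable_sum) auto
    show "(\<lambda>Y. (?Z Y)\<^sup>2) \<in> borel_measurable ?M" by measurable
    show "AE Y in ?M. norm ((?Z Y)\<^sup>2) \<le> norm (real (D k) * (\<Sum>a<D k. (Yf D k ?R ?\<alpha> Y a)\<^sup>2))"
    proof (intro AE_I2)
      fix Y :: "nat \<times> nat \<times> nat \<times> nat \<Rightarrow> real"
      have "(?Z Y)\<^sup>2 \<le> (\<Sum>a<D k. (Yf D k ?R ?\<alpha> Y a)\<^sup>2) * card {..<D k}"
        by (rule sum_squared_le_sum_of_squares)
      then show "norm ((?Z Y)\<^sup>2) \<le> norm (real (D k) * (\<Sum>a<D k. (Yf D k ?R ?\<alpha> Y a)\<^sup>2))"
        by (simp add: mult.commute sum_nonneg)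
    qed
  qed
  define N where "N = real (d k * D (Suc k))"
  define Bd where "Bd = 2 * ?\<alpha>\<^sup>2 * (S2 k * nR D k ?R)\<^sup>2 * (N * (N * (3 * (var D k)\<^sup>2)))
      + 2 * (?\<alpha> * var D k * S2 k * nR D k ?R)\<^sup>2"
  have Ybd: "a < D k \<Longrightarrow> (\<integral>Y. (Yf D k ?R ?\<alpha> Y a)\<^sup>2 \<partial>?M) \<le> Bd" for a
    using Yf_sq(2)[OF _ alp_nonneg, of a D k ?R] by (simp add: Bd_def N_def card_Jr)
  have Q1: "(\<integral>Y. (?Z Y)\<^sup>2 \<partial>?M) \<le> real (D k) * Bd"
    unfolding var_eq using sum_mono[of "{..<D k}" "\<lambda>a. \<integral>Y. (Yf D k ?R ?\<alpha> Y a)\<^sup>2 \<partial>?M" "\<lambda>_. Bd"] Ybd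
    by simp
  have Q2: "real (D k) * Bd = c2 D k * (nR D k ?R)\<^sup>2 / real (D k)"
  proof -
    have pos: "0 < real (D (n - 1))" "0 < real (D (Suc k))" using v k by (auto simp: Suc_le_eq)
    have a2: "?\<alpha>\<^sup>2 = (Ck k)\<^sup>2 / (real (D k) * real (D (n - 1)))"
      by (simp add: alp_def power_divide)
    have v2: "(var D k)\<^sup>2 = (\<sigma> k) ^ 4 / (real (D k) * real (D (Suc k)))"
      by (simp add: var_Suc[OF k] power_divide power_mult[symmetric])
    have "Bd = ?\<alpha>\<^sup>2 * (var D k)\<^sup>2 * (S2 k)\<^sup>2 * (nR D k ?R)\<^sup>2 * (6 * N\<^sup>2 + 2)"
      unfolding Bd_def by (simp add: power_mult_distrib power2_eq_square algebra_simps)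
    also have "\<dots> = (Ck k)\<^sup>2 * (\<sigma> k) ^ 4 * (S2 k)\<^sup>2 * (nR D k ?R)\<^sup>2 * (6 * N\<^sup>2 + 2)
        / (real (D k) * real (D (n - 1)) * (real (D k) * real (D (Suc k))))"
      unfolding a2 v2 by simp
    finally show ?thesis
      using Dk pos unfolding c2_def N_def by (simp add: field_simps power2_eq_square)
  qed
  have "(\<integral>\<^sup>+Y. ennreal \<bar>?Z Y\<bar> \<partial>?M)
      \<le> ennreal ((nR D k ?R + 1) / sqrt (real (D k)) / 2
           + c2 D k * (nR D k ?R)\<^sup>2 / real (D k) / (2 * ((nR D k ?R + 1) / sqrt (real (D k)))))"
    using Q1 Q2 Dk nR_nonneg[of D k ?R]
    by (intro nn_abs_bound[OF P.prob_space_axioms Zi Z2i]) auto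
  also have "\<dots> \<le> ennreal ((1 + (1 + c2 D k) * nR D k ?R) / (2 * sqrt (real (D k))))"
    using Dk by (intro ennreal_leI alg_bound c2_nonneg nR_nonneg) auto
  finally show ?thesis by (simp only: Z)
qed

lemma Rm_meas[measurable]: "(\<lambda>X. Rm D k X c b) \<in> borel_measurable (PiM K (G D'))"
  unfolding Rm_def by measurable

lemma nR_Rm_meas[measurable]: "(\<lambda>X. nR D k (Rm D k X)) \<in> borel_measurable (PiM K (G D'))"
  unfolding nR_def by measurable

lemma fold_Suc:
  assumes k: "Suc k < n" and f: "f \<in> borel_measurable borel"
  shows "(\<integral>\<^sup>+A. f (Fr D A (Suc k)) \<partial>PiM (Ix D) (G D))
       = (\<integral>\<^sup>+X. f (nR D k (Rm D k X)) \<partial>PiM (Ix D - Js D k) (G D))"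
proof -
  interpret PJ: prob_space "PiM (Js D k) (G D)" by (intro prob_space_PiM prob_G)
  have "(\<integral>\<^sup>+A. f (Fr D A (Suc k)) \<partial>PiM (Ix D) (G D))
      = (\<integral>\<^sup>+X. (\<integral>\<^sup>+Y. f (Fr D (mg D k X Y) (Suc k)) \<partial>PiM (Js D k) (G D)) \<partial>PiM (Ix D - Js D k) (G D))"
    by (intro fold_site k measurable_compose[OF Fr_meas f])
  also have "\<dots> = (\<integral>\<^sup>+X. f (nR D k (Rm D k X)) \<partial>PiM (Ix D - Js D k) (G D))"
    by (intro nn_integral_cong) (simp add: Fr_Suc_mg[OF k] PJ.emeasure_space_1)
  finally show ?thesis .
qed

lemma outer_bound:
  assumes k: "Suc k < n" and v: "\<forall>i<n. 1 \<le> D i"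
  shows "(\<integral>\<^sup>+A. ennreal \<bar>V D k A - V D (Suc k) A\<bar> \<partial>PiM (Ix D) (G D))
     \<le> (\<integral>\<^sup>+A. ennreal ((1 + (1 + c2 D k) * Fr D A (Suc k)) / (2 * sqrt (real (D k)))) \<partial>PiM (Ix D) (G D))"
proof -
  have "(\<integral>\<^sup>+A. ennreal \<bar>V D k A - V D (Suc k) A\<bar> \<partial>PiM (Ix D) (G D))
      = (\<integral>\<^sup>+X. (\<integral>\<^sup>+Y. ennreal \<bar>V D k (mg D k X Y) - V D (Suc k) (mg D k X Y)\<bar> \<partial>PiM (Js D k) (G D)) \<partial>PiM (Ix D - Js D k) (G D))"
    by (intro fold_site k) measurable
  also have "\<dots> \<le> (\<integral>\<^sup>+X. ennreal ((1 + (1 + c2 D k) * nR D k (Rm D k X)) / (2 * sqrt (real (D k)))) \<partial>PiM (Ix D - Js D k) (G D))"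
    by (intro nn_integral_mono inner_bound k v)
  also have "\<dots> = (\<integral>\<^sup>+A. ennreal ((1 + (1 + c2 D k) * Fr D A (Suc k)) / (2 * sqrt (real (D k)))) \<partial>PiM (Ix D) (G D))"
    by (rule fold_Suc[OF k, symmetric]) measurable
  finally show ?thesis .
qed

lemma Fr_last: "Fr D A (n - 1) = real (D (n - 1))"
  unfolding Fr_def chain_def by (simp add: if_distrib[where f="\<lambda>z. z\<^sup>2"] sum.delta cong: if_cong)

lemma Fr_finite_step:
  assumes k: "Suc k < n" and v: "\<forall>i<n. 1 \<le> D i"
  shows "(\<integral>\<^sup>+A. ennreal (Fr D A k) \<partial>PiM (Ix D) (G D))
       = ennreal (real (D k) * var D k * S2 k) * (\<integral>\<^sup>+A. ennreal (Fr D A (Suc k)) \<partial>PiM (Ix D) (G D))"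
proof -
  have inner: "(\<integral>\<^sup>+Y. ennreal (Fr D (mg D k X Y) k) \<partial>PiM (Js D k) (G D))
      = ennreal (real (D k) * var D k * S2 k * nR D k (Rm D k X))" for X
  proof -
    have int: "integrable (PiM (Js D k) (G D)) (\<lambda>Y. \<Sum>a<D k. \<Sum>b<D (n - 1). (Lf D k (Rm D k X) Y a b)\<^sup>2)"
      using inner_Lf(1) by (intro Bochner_Integration.integrable_sum) auto
    have "(\<integral>\<^sup>+Y. ennreal (Fr D (mg D k X Y) k) \<partial>PiM (Js D k) (G D))
        = ennreal (\<integral>Y. (\<Sum>a<D k. \<Sum>b<D (n - 1). (Lf D k (Rm D k X) Y a b)\<^sup>2) \<partial>PiM (Js D k) (G D))"
      unfolding Fr_split[OF k] by (intro nn_integral_eq_integral int AE_I2) (auto intro!: sum_nonneg)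
    also have "(\<integral>Y. (\<Sum>a<D k. \<Sum>b<D (n - 1). (Lf D k (Rm D k X) Y a b)\<^sup>2) \<partial>PiM (Js D k) (G D))
        = (\<Sum>a<D k. \<Sum>b<D (n - 1). var D k * (\<Sum>p\<in>Jr D k a. (rr k (Rm D k X) b p)\<^sup>2))"
      using inner_Lf
      by (simp add: Bochner_Integration.integral_sum Bochner_Integration.integrable_sum)
    also have "\<dots> = real (D k) * var D k * S2 k * nR D k (Rm D k X)"
    proof -
      have "(\<Sum>b<D (n - 1). var D k * (\<Sum>p\<in>Jr D k a. (rr k (Rm D k X) b p)\<^sup>2)) = var D k * (S2 k * nR D k (Rm D k X))" for a
        by (simp only: sum_distrib_left[symmetric] rr_sq)
      then show ?thesis by simp
    qed
    finally show ?thesis .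
  qed
  have "(\<integral>\<^sup>+A. ennreal (Fr D A k) \<partial>PiM (Ix D) (G D))
      = (\<integral>\<^sup>+X. (\<integral>\<^sup>+Y. ennreal (Fr D (mg D k X Y) k) \<partial>PiM (Js D k) (G D)) \<partial>PiM (Ix D - Js D k) (G D))"
    by (intro fold_site k) measurable
  also have "\<dots> = (\<integral>\<^sup>+X. ennreal (real (D k) * var D k * S2 k) * ennreal (nR D k (Rm D k X)) \<partial>PiM (Ix D - Js D k) (G D))"
    unfolding inner
    by (intro nn_integral_cong ennreal_mult) (simp_all add: var_nonneg S2_nonneg nR_nonneg)
  also have "\<dots> = ennreal (real (D k) * var D k * S2 k) * (\<integral>\<^sup>+X. ennreal (nR D k (Rm D k X)) \<partial>PiM (Ix D - Js D k) (G D))"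
    by (rule nn_integral_cmult) measurable
  also have "(\<integral>\<^sup>+X. ennreal (nR D k (Rm D k X)) \<partial>PiM (Ix D - Js D k) (G D)) = (\<integral>\<^sup>+A. ennreal (Fr D A (Suc k)) \<partial>PiM (Ix D) (G D))"
    by (rule fold_Suc[OF k, symmetric]) measurable
  finally show ?thesis .
qed

lemma Fr_finite:
  assumes v: "\<forall>i<n. 1 \<le> D i" and j: "j \<le> n - 1"
  shows "(\<integral>\<^sup>+A. ennreal (Fr D A j) \<partial>PiM (Ix D) (G D)) < \<infinity>"
proof -
  interpret P: prob_space "PiM (Ix D) (G D)" by (intro prob_space_PiM prob_G)
  have "\<forall>j. n - 1 - j = r \<longrightarrow> j \<le> n - 1 \<longrightarrow> (\<integral>\<^sup>+A. ennreal (Fr D A j) \<partial>PiM (Ix D) (G D)) < \<infinity>" for r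
  proof (induction r)
    case 0
    show ?case
    proof (intro allI impI)
      fix j assume "n - 1 - j = 0" "j \<le> n - 1"
      then have "j = n - 1" by simp
      then show "(\<integral>\<^sup>+A. ennreal (Fr D A j) \<partial>PiM (Ix D) (G D)) < \<infinity>"
        using Fr_last[of D] by (simp add: P.emeasure_space_1)
    qed
  next
    case (Suc r)
    show ?case
    proof (intro allI impI)
      fix j assume jr: "n - 1 - j = Suc r" "j \<le> n - 1"
      then have k: "Suc j < n" by simp
      have "n - 1 - Suc j = r" "Suc j \<le> n - 1" using jr by auto
      then have "(\<integral>\<^sup>+A. ennreal (Fr D A (Suc j)) \<partial>PiM (Ix D) (G D)) < \<infinity>"
        using Suc.IH by blast
      then show "(\<integral>\<^sup>+A. ennreal (Fr D A j) \<partial>PiM (Ix D) (G D)) < \<infinity>"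
        unfolding Fr_finite_step[OF k v] by (simp add: ennreal_mult_less_top)
    qed
  qed
  then show ?thesis using j by blast
qed

end


lemma exp_lipschitz:
  fixes c u v :: real
  assumes c: "0 \<le> c" and u: "0 \<le> u" and v: "0 \<le> v"
  shows "\<bar>exp (- (c * u)) - exp (- (c * v))\<bar> \<le> c * \<bar>u - v\<bar>"
proof -
  have main: "exp (- (c * a)) - exp (- (c * b)) \<le> c * (b - a)" if ab: "a \<le> b" "0 \<le> a" for a b :: real
  proof -
    have "exp (- (c * a)) - exp (- (c * b)) = exp (- (c * a)) * (1 - exp (- (c * (b - a))))"
      by (simp add: algebra_simps flip: exp_add)
    also have "\<dots> \<le> 1 * (c * (b - a))"
    proof (rule mult_mono)
      show "exp (- (c * a)) \<le> 1" using c ab by simp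
      show "1 - exp (- (c * (b - a))) \<le> c * (b - a)" using exp_ge_add_one_self[of "- (c * (b - a))"] by simp
      show "0 \<le> 1 - exp (- (c * (b - a)))" using c ab by simp
    qed simp
    finally show ?thesis by simp
  qed
  have "0 \<le> exp (- (c * u)) - exp (- (c * v))" if "u \<le> v" using that c by (simp add: mult_left_mono)
  moreover have "0 \<le> exp (- (c * v)) - exp (- (c * u))" if "v \<le> u" using that c by (simp add: mult_left_mono)
  ultimately show ?thesis using main[of u v] main[of v u] u v by (cases "u \<le> v") (auto simp: abs_if)
qed

context mps
begin

definition Jm :: "(nat \<Rightarrow> nat) \<Rightarrow> nat \<Rightarrow> (nat \<times> nat \<times> nat \<times> nat) set" where
  "Jm D k = {p \<in> Ix D. Suc k \<le> fst p \<and> fst p < n - 1}"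

context
  fixes D :: "nat \<Rightarrow> nat" and k j :: nat
  assumes k: "Suc k < n"
begin

lemma Jm_eq: "Jm (D(k := j)) k = Jm D k"
  unfolding Jm_def mps_index_def by auto

lemma PiM_Jm_eq: "PiM (Jm D k) (G (D(k := j))) = PiM (Jm D k) (G D)"
  by (intro PiM_cong refl) (auto simp: Jm_def G_def var_def mps_index_def)

lemma Fr_Suc_eq: "Fr (D(k := j)) A (Suc k) = Fr D A (Suc k)"
proof -
  have "chain (D(k := j)) A (Suc k) (n - 1 - Suc k) u v = chain D A (Suc k) (n - 1 - Suc k) u v" for u v
    unfolding chain_def by (intro chn_cong_e) auto
  then show ?thesis using k unfolding Fr_def by simp
qed

lemma V_Suc_eq: "V (D(k := j)) (Suc k) A = V D (Suc k) A"
proof -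
  have nk: "n - 1 \<noteq> k" "Suc k \<noteq> k" using k by auto
  show ?thesis unfolding V_def Fr_Suc_eq using nk by simp
qed

lemma Fr_Suc_restrict: "Fr D' A (Suc k) = Fr D' (restrict A (Jm D' k)) (Suc k)"
  using k by (intro Fr_cong_A) (auto simp: Jm_def mps_index_def)

lemma V_Suc_restrict: "V D' (Suc k) A = V D' (Suc k) (restrict A (Jm D' k))"
  unfolding V_def by (subst Fr_Suc_restrict) simp

lemma Jm_sub: "Jm D' k \<subseteq> Ix D'" by (auto simp: Jm_def)

lemma integral_Suc_inv:
  fixes g :: "real \<Rightarrow> 'b::{banach, second_countable_topology}"
  assumes g: "g \<in> borel_measurable borel"
  shows "(\<integral>A. g (V (D(k := j)) (Suc k) A) \<partial>PiM (Ix (D(k := j))) (G (D(k := j))))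
       = (\<integral>A. g (V D (Suc k) A) \<partial>PiM (Ix D) (G D))"
proof -
  have "(\<integral>A. g (V (D(k := j)) (Suc k) A) \<partial>PiM (Ix (D(k := j))) (G (D(k := j))))
      = (\<integral>A. g (V (D(k := j)) (Suc k) A) \<partial>PiM (Jm (D(k := j)) k) (G (D(k := j))))"
    by (intro integral_PiM_restrict prob_G finite_Ix Jm_sub measurable_compose[OF V_meas g])
       (simp add: V_Suc_restrict[symmetric])
  also have "\<dots> = (\<integral>A. g (V D (Suc k) A) \<partial>PiM (Jm D k) (G D))"
    unfolding Jm_eq PiM_Jm_eq V_Suc_eq ..
  also have "\<dots> = (\<integral>A. g (V D (Suc k) A) \<partial>PiM (Ix D) (G D))"
    by (intro integral_PiM_restrict[symmetric] prob_G finite_Ix Jm_sub measurable_compose[OF V_meas g])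
       (simp add: V_Suc_restrict[symmetric])
  finally show ?thesis .
qed

lemma integral_Fr_inv:
  "(\<integral>A. Fr (D(k := j)) A (Suc k) \<partial>PiM (Ix (D(k := j))) (G (D(k := j))))
       = (\<integral>A. Fr D A (Suc k) \<partial>PiM (Ix D) (G D))"
proof -
  have "(\<integral>A. Fr (D(k := j)) A (Suc k) \<partial>PiM (Ix (D(k := j))) (G (D(k := j))))
      = (\<integral>A. Fr (D(k := j)) A (Suc k) \<partial>PiM (Jm (D(k := j)) k) (G (D(k := j))))"
    by (intro integral_PiM_restrict prob_G finite_Ix Jm_sub Fr_meas) (simp add: Fr_Suc_restrict[symmetric])
  also have "\<dots> = (\<integral>A. Fr D A (Suc k) \<partial>PiM (Jm D k) (G D))"
    unfolding Jm_eq PiM_Jm_eq Fr_Suc_eq ..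
  also have "\<dots> = (\<integral>A. Fr D A (Suc k) \<partial>PiM (Ix D) (G D))"
    by (intro integral_PiM_restrict[symmetric] prob_G finite_Ix Jm_sub Fr_meas) (simp add: Fr_Suc_restrict[symmetric])
  finally show ?thesis .
qed

end

lemma step_conv:
  assumes k: "Suc k < n" and v: "\<forall>i<n. 1 \<le> D i"
  shows "(\<lambda>m. \<integral>A. complex_of_real (exp (- (t\<^sup>2 * V (D(k := Suc m)) k A) / 2)) \<partial>PiM (Ix (D(k := Suc m))) (G (D(k := Suc m))))
     \<longlonglongrightarrow> (\<integral>A. complex_of_real (exp (- (t\<^sup>2 * V D (Suc k) A) / 2)) \<partial>PiM (Ix D) (G D))"
proof -
  define h where "h x = exp (- (t\<^sup>2 / 2 * x))" for x :: real
  have hm[measurable]: "h \<in> borel_measurable borel" unfolding h_def by measurable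
  have hh: "exp (- (t\<^sup>2 * x) / 2) = h x" for x by (simp add: h_def)
  define a where "a m = (\<integral>A. h (V (D(k := Suc m)) k A) \<partial>PiM (Ix (D(k := Suc m))) (G (D(k := Suc m))))" for m
  define b where "b = (\<integral>A. h (V D (Suc k) A) \<partial>PiM (Ix D) (G D))"
  define E where "E = (\<integral>A. Fr D A (Suc k) \<partial>PiM (Ix D) (G D))"
  define c where "c = 1 + c2 D k"
  define e where "e m = t\<^sup>2 / 2 * ((1 + c * E) / 2) * sqrt (inverse (real (Suc m)))" for m
  have Enn: "0 \<le> E" unfolding E_def by (intro integral_nonneg_AE AE_I2 Fr_nonneg)
  have cnn: "0 \<le> c" unfolding c_def using c2_nonneg[of D k] by simp
  have bound: "\<bar>a m - b\<bar> \<le> e m" for m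
  proof -
    define D' where "D' = D(k := Suc m)"
    have v': "\<forall>i<n. 1 \<le> D' i" using v by (simp add: D'_def)
    have D'k: "D' k = Suc m" by (simp add: D'_def)
    interpret P: prob_space "PiM (Ix D') (G D')" by (intro prob_space_PiM prob_G)
    have c2eq: "c2 D' k = c2 D k"
    proof -
      have nk: "n - 1 \<noteq> k" "Suc k \<noteq> k" using k by auto
      show ?thesis using nk by (simp add: c2_def D'_def)
    qed
    have b': "b = (\<integral>A. h (V D' (Suc k) A) \<partial>PiM (Ix D') (G D'))"
      unfolding b_def D'_def by (rule integral_Suc_inv[OF k hm, symmetric])
    have E': "E = (\<integral>A. Fr D' A (Suc k) \<partial>PiM (Ix D') (G D'))"
      unfolding E_def D'_def by (rule integral_Fr_inv[OF k, symmetric])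
    have hb: "\<bar>h x\<bar> \<le> 1" if "0 \<le> x" for x using that by (simp add: h_def)
    have int_h: "integrable (PiM (Ix D') (G D')) (\<lambda>A. h (V D' j A))" for j
      by (intro P.integrable_const_bound[where B=1] AE_I2) (auto simp: hb V_nonneg)
    have Fr_int: "integrable (PiM (Ix D') (G D')) (\<lambda>A. Fr D' A (Suc k))"
      using Fr_finite[OF v', of "Suc k"] k by (intro integrableI_nonneg AE_I2) (auto simp: Fr_nonneg)
    have "ennreal \<bar>a m - b\<bar> = ennreal (norm (\<integral>A. h (V D' k A) - h (V D' (Suc k) A) \<partial>PiM (Ix D') (G D')))"
      unfolding a_def b' D'_def[symmetric] using int_h by simp
    also have "\<dots> \<le> (\<integral>\<^sup>+A. norm (h (V D' k A) - h (V D' (Suc k) A)) \<partial>PiM (Ix D') (G D'))"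
      using int_h by (intro integral_norm_bound_ennreal) auto
    also have "\<dots> \<le> (\<integral>\<^sup>+A. ennreal (t\<^sup>2 / 2) * ennreal \<bar>V D' k A - V D' (Suc k) A\<bar> \<partial>PiM (Ix D') (G D'))"
    proof (intro nn_integral_mono)
      fix A
      have "\<bar>h (V D' k A) - h (V D' (Suc k) A)\<bar> \<le> t\<^sup>2 / 2 * \<bar>V D' k A - V D' (Suc k) A\<bar>"
        unfolding h_def by (intro exp_lipschitz V_nonneg) simp
      then show "ennreal (norm (h (V D' k A) - h (V D' (Suc k) A))) \<le> ennreal (t\<^sup>2 / 2) * ennreal \<bar>V D' k A - V D' (Suc k) A\<bar>"
        by (simp add: ennreal_mult[symmetric] ennreal_leI)
    qed
    also have "\<dots> = ennreal (t\<^sup>2 / 2) * (\<integral>\<^sup>+A. ennreal \<bar>V D' k A - V D' (Suc k) A\<bar> \<partial>PiM (Ix D') (G D'))"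
      by (rule nn_integral_cmult) measurable
    also have "\<dots> \<le> ennreal (t\<^sup>2 / 2) * (\<integral>\<^sup>+A. ennreal ((1 + (1 + c2 D' k) * Fr D' A (Suc k)) / (2 * sqrt (real (D' k)))) \<partial>PiM (Ix D') (G D'))"
      by (intro mult_left_mono outer_bound k v') auto
    also have "(\<integral>\<^sup>+A. ennreal ((1 + (1 + c2 D' k) * Fr D' A (Suc k)) / (2 * sqrt (real (D' k)))) \<partial>PiM (Ix D') (G D'))
        = ennreal (\<integral>A. (1 + (1 + c2 D' k) * Fr D' A (Suc k)) / (2 * sqrt (real (D' k))) \<partial>PiM (Ix D') (G D'))"
      using Fr_int c2_nonneg[of D' k]
      by (intro nn_integral_eq_integral AE_I2)
         (auto intro!: integrable_divide Bochner_Integration.integrable_add integrable_mult_right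
               simp: Fr_nonneg add_nonneg_nonneg)
    also have "(\<integral>A. (1 + (1 + c2 D' k) * Fr D' A (Suc k)) / (2 * sqrt (real (D' k))) \<partial>PiM (Ix D') (G D'))
        = (1 + c * E) / (2 * sqrt (real (Suc m)))"
      unfolding E' c_def c2eq D'k using Fr_int by (simp add: P.prob_space)
    also have "ennreal (t\<^sup>2 / 2) * ennreal ((1 + c * E) / (2 * sqrt (real (Suc m)))) = ennreal (e m)"
    proof -
      have si: "sqrt (inverse (real (Suc m))) = 1 / sqrt (real (Suc m))"
        by (simp add: real_sqrt_inverse divide_inverse)
      have eq: "t\<^sup>2 / 2 * ((1 + c * E) / (2 * sqrt (real (Suc m)))) = e m"
        unfolding e_def si by simp
      have "ennreal (t\<^sup>2 / 2) * ennreal ((1 + c * E) / (2 * sqrt (real (Suc m))))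
          = ennreal (t\<^sup>2 / 2 * ((1 + c * E) / (2 * sqrt (real (Suc m)))))"
        using cnn Enn by (intro ennreal_mult[symmetric]) auto
      then show ?thesis unfolding eq .
    qed
    finally show ?thesis using cnn Enn by (simp add: e_def)
  qed
  have e0: "e \<longlonglongrightarrow> 0"
  proof -
    have "(\<lambda>m. sqrt (inverse (real (Suc m)))) \<longlonglongrightarrow> sqrt 0"
      by (intro tendsto_real_sqrt LIMSEQ_inverse_real_of_nat)
    then show ?thesis unfolding e_def by (intro tendsto_mult_right_zero) simp
  qed
  have "(\<lambda>m. a m - b) \<longlonglongrightarrow> 0"
    by (rule Lim_null_comparison[OF _ e0]) (simp add: bound)
  then have "a \<longlonglongrightarrow> b" by (rule LIM_zero_cancel)
  then have "(\<lambda>m. complex_of_real (a m)) \<longlonglongrightarrow> complex_of_real b" by (rule tendsto_of_real)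
  then show ?thesis unfolding a_def b_def hh by simp
qed

end


context mps
begin

lemma V_last: "\<forall>i<n. 1 \<le> D i \<Longrightarrow> V D (n - 1) A = Ck (n - 1)"
proof -
  assume v: "\<forall>i<n. 1 \<le> D i"
  then have pos: "0 < real (D (n - 1))" using n1 by (auto simp: Suc_le_eq)
  show ?thesis unfolding V_def Fr_last using pos by simp
qed

lemma target_var: "(\<Prod>i<n. (\<Sum>j<d i. (\<phi> i (x i) j)\<^sup>2) * (\<sigma> i)\<^sup>2) = Ck (n - 1)"
proof -
  obtain n' where n': "n = Suc n'" using n1 by (cases n) auto
  show ?thesis unfolding Ck_def cc_def ph_def by (simp add: n' mult_ac)
qed

lemma law_real_distribution: "real_distribution (mps_law n d \<phi> \<sigma> x D)"
proof -
  have meas: "(\<lambda>A. mps_output n d \<phi> D A x) \<in> borel_measurable (PiM (Ix D) (G D))"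
    unfolding trace by measurable
  show ?thesis unfolding mps_law_def entries_eq
    by (intro prob_space.real_distribution_distr prob_space_PiM prob_G meas)
qed

theorem main: "seq_weak_limit n (mps_law n d \<phi> \<sigma> x) (gaussian 0 (\<Prod>i<n. (\<Sum>j<d i. (\<phi> i (x i) j)\<^sup>2) * (\<sigma> i)\<^sup>2))"
proof -
  define \<nu> where "\<nu> = gaussian 0 (\<Prod>i<n. (\<Sum>j<d i. (\<phi> i (x i) j)\<^sup>2) * (\<sigma> i)\<^sup>2)"
  have \<nu>: "\<nu> = gaussian 0 (Ck (n - 1))" unfolding \<nu>_def target_var ..
  define \<mu> where "\<mu> k D = (if k = 0 then mps_law n d \<phi> \<sigma> x D else if k < n then mixm D k else \<nu>)"
    for k :: nat and D :: "nat \<Rightarrow> nat"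
  have rd: "real_distribution (\<mu> k D)" if "k \<le> n" for k D
  proof (cases "k = 0")
    case True then show ?thesis by (simp add: \<mu>_def law_real_distribution)
  next
    case False
    show ?thesis
    proof (cases "k < n")
      case True then show ?thesis using False by (simp add: \<mu>_def real_distribution_mix)
    next
      case False2: False
      then show ?thesis using False n1 by (simp add: \<mu>_def \<nu> real_distribution_gaussian Ck_nonneg)
    qed
  qed
  have chk: "char (\<mu> k D) t = (\<integral>A. complex_of_real (exp (- (t\<^sup>2 * V D k A) / 2)) \<partial>PiM (Ix D) (G D))"
    if "k < n" for k D t
  proof (cases "k = 0")
    case True then show ?thesis by (simp add: \<mu>_def char_L)
  next
    case False then show ?thesis using that by (simp add: \<mu>_def char_mix)
  qed
  show ?thesis
    unfolding seq_weak_limit_def \<nu>_def[symmetric]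
  proof (intro exI[of _ \<mu>] conjI allI impI)
    fix D :: "nat \<Rightarrow> nat" assume "\<forall>i<n. 1 \<le> D i"
    show "\<mu> 0 D = mps_law n d \<phi> \<sigma> x D" by (simp add: \<mu>_def)
  next
    fix D :: "nat \<Rightarrow> nat" assume "\<forall>i<n. 1 \<le> D i"
    show "\<mu> n D = \<nu>" using n1 by (simp add: \<mu>_def)
  next
    fix k :: nat and D :: "nat \<Rightarrow> nat" assume k: "k < n" and v: "\<forall>i<n. 1 \<le> D i"
    show "real_distribution (\<mu> (Suc k) D)" using k by (intro rd) simp
    show "weak_conv_m (\<lambda>m. \<mu> k (D(k := Suc m))) (\<mu> (Suc k) D)"
    proof (rule levy_continuity)
      show "\<And>m. real_distribution (\<mu> k (D(k := Suc m)))" using k by (intro rd) simp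
      show "real_distribution (\<mu> (Suc k) D)" using k by (intro rd) simp
      fix t
      show "(\<lambda>m. char (\<mu> k (D(k := Suc m))) t) \<longlonglongrightarrow> char (\<mu> (Suc k) D) t"
      proof (cases "Suc k < n")
        case True
        show ?thesis unfolding chk[OF k] chk[OF True] using step_conv[OF True v] .
      next
        case False
        then have kn: "k = n - 1" "Suc k = n" using k by auto
        have const: "char (\<mu> k (D(k := Suc m))) t = complex_of_real (exp (- (t\<^sup>2 * Ck (n - 1)) / 2))" for m
        proof -
          interpret P: prob_space "PiM (Ix (D(k := Suc m))) (G (D(k := Suc m)))" by (intro prob_space_PiM prob_G)
          have v': "\<forall>i<n. 1 \<le> (D(k := Suc m)) i" using v by simp
          have "char (\<mu> k (D(k := Suc m))) t
              = (\<integral>A. complex_of_real (exp (- (t\<^sup>2 * V (D(k := Suc m)) k A) / 2)) \<partial>PiM (Ix (D(k := Suc m))) (G (D(k := Suc m))))"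
            by (rule chk[OF k])
          also have "\<dots> = (\<integral>A. complex_of_real (exp (- (t\<^sup>2 * Ck (n - 1)) / 2)) \<partial>PiM (Ix (D(k := Suc m))) (G (D(k := Suc m))))"
          proof -
            have VL: "V (D(k := Suc m)) k A = Ck (n - 1)" for A
            proof -
              have "V (D(k := Suc m)) k A = V (D(k := Suc m)) (n - 1) A"
                by (rule arg_cong[where f="\<lambda>j. V (D(k := Suc m)) j A"]) (rule kn(1))
              also have "\<dots> = Ck (n - 1)" by (rule V_last[OF v'])
              finally show ?thesis .
            qed
            show ?thesis by (simp only: VL)
          qed
          also have "\<dots> = complex_of_real (exp (- (t\<^sup>2 * Ck (n - 1)) / 2))"
            by (simp add: P.prob_space)
          finally show ?thesis .
        qed
        have "char (\<mu> (Suc k) D) t = complex_of_real (exp (- (t\<^sup>2 * Ck (n - 1)) / 2))"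
        proof -
          have "\<mu> (Suc k) D = \<nu>" unfolding kn(2) using n1 by (simp add: \<mu>_def)
          then show ?thesis unfolding char_def \<nu> by (simp only:) (rule char_gaussian[OF Ck_nonneg])
        qed
        then show ?thesis unfolding const by simp
      qed
    qed
  qed
qed

end

theorem proposition2:
  fixes n :: nat and d :: "nat \<Rightarrow> nat" and \<phi> :: "nat \<Rightarrow> real \<Rightarrow> nat \<Rightarrow> real"
    and \<sigma> :: "nat \<Rightarrow> real" and x :: "nat \<Rightarrow> real"
  assumes "1 \<le> n"
    and "\<forall>i<n. 1 \<le> d i"
    and "\<forall>i<n. 0 < \<sigma> i"
  shows "seq_weak_limit n (mps_law n d \<phi> \<sigma> x)
           (gaussian 0 (\<Prod>i<n. (\<Sum>j<d i. (\<phi> i (x i) j)\<^sup>2) * (\<sigma> i)\<^sup>2))"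
proof -
  interpret mps n d \<phi> \<sigma> x using assms by unfold_locales
  show ?thesis by (rule main)
qed


end
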